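(* Let $k$ be a field, $A$ a commutative $k$-algebra, $k_n=k[t]/(t^{n+1})$, and $B$ a $k_n$-algebra with an isomorphism $gr\,B\simeq A\otimes_kk_n$. Let $\gamma:gr\,D(B)\to\operatorname{End}_{k_n}(gr\,B)$ be the natural homomorphism. Then (i) $\gamma$ maps $gr\,D(B)$ into $D(gr\,B)$; (ii) the map $\gamma:gr\,D(B)\to D(gr\,B)$ is injective if and only if it is surjective.
   Context: All differential operators are $k[t]$-linear. For a $k_n$-algebra $C$, $D(C)=\bigcup_mD^m(C)$, where $D^m(C)$ is the set of $d\in\operatorname{End}_{k_n}(C)$ with $[f_m,\dots,[f_1,[f_0,d]]\dots]=0$ for all $f_0,\dots,f_m\in C$ (acting by left multiplication, $[f,d]=f\circ d-d\circ f$). $gr$ denotes the associated graded for the filtration by powers of $t$: $gr\,B=\bigoplus_it^iB/t^{i+1}B$ and $gr\,D(B)=\bigoplus_it^iD(B)/t^{i+1}D(B)$. The homomorphism $\gamma$ sends the class of $d\in t^iD(B)$ to the $k_n$-endomorphism of $gr\,B$ mapping $t^jB/t^{j+1}B\to t^{i+j}B/t^{i+j+1}B$ induced by $d$ (composition of the natural map $gr\,D(B)\to gr\,\operatorname{End}_{k_n}(B)$ and the natural isomorphism $gr\,\operatorname{End}_{k_n}(B)\to\operatorname{End}_{k_n}(gr\,B)$). *)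

theory Defs
  imports "HOL-Algebra.Ring" "HOL-Library.FuncSet" "HOL-Library.Function_Algebras"
begin

definition k_algebra_str :: "('k::field \<Rightarrow> 'b::ring_1) \<Rightarrow> bool" where
  "k_algebra_str \<iota> \<longleftrightarrow> \<iota> 0 = 0 \<and> \<iota> 1 = 1 \<and> (\<forall>a b. \<iota> (a + b) = \<iota> a + \<iota> b)
     \<and> (\<forall>a b. \<iota> (a * b) = \<iota> a * \<iota> b) \<and> (\<forall>c x. \<iota> c * x = x * \<iota> c)"

text \<open>A k_n-algebra structure: a ring homomorphism k[t]/(t^(n+1)) into the centre,
  i.e. a k-algebra structure together with the image t of the variable, which is
  central and satisfies t^(n+1) = 0.\<close>
definition kn_algebra_str :: "('k::field \<Rightarrow> 'b::ring_1) \<Rightarrow> 'b \<Rightarrow> nat \<Rightarrow> bool" where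
  "kn_algebra_str \<iota> t n \<longleftrightarrow> k_algebra_str \<iota> \<and> (\<forall>x. t * x = x * t) \<and> t ^ Suc n = 0"

definition type_ring :: "'b::ring_1 ring" where
  "type_ring = \<lparr>carrier = UNIV, mult = (*), one = 1, zero = 0, add = (+)\<rparr>"

definition End_kn :: "('c, 'm) ring_scheme \<Rightarrow> ('k \<Rightarrow> 'c) \<Rightarrow> 'c \<Rightarrow> ('c \<Rightarrow> 'c) set" where
  "End_kn R \<iota> \<tau> = {d. d \<in> carrier R \<rightarrow> carrier R \<and> d \<in> extensional (carrier R)
     \<and> (\<forall>x\<in>carrier R. \<forall>y\<in>carrier R. d (x \<oplus>\<^bsub>R\<^esub> y) = d x \<oplus>\<^bsub>R\<^esub> d y)
     \<and> (\<forall>c. \<forall>x\<in>carrier R. d (\<iota> c \<otimes>\<^bsub>R\<^esub> x) = \<iota> c \<otimes>\<^bsub>R\<^esub> d x)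
     \<and> (\<forall>x\<in>carrier R. d (\<tau> \<otimes>\<^bsub>R\<^esub> x) = \<tau> \<otimes>\<^bsub>R\<^esub> d x)}"

definition lie_comm :: "('c, 'm) ring_scheme \<Rightarrow> 'c \<Rightarrow> ('c \<Rightarrow> 'c) \<Rightarrow> ('c \<Rightarrow> 'c)" where
  "lie_comm R f d = (\<lambda>x\<in>carrier R. (f \<otimes>\<^bsub>R\<^esub> d x) \<ominus>\<^bsub>R\<^esub> d (f \<otimes>\<^bsub>R\<^esub> x))"

definition iter_comm :: "('c, 'm) ring_scheme \<Rightarrow> 'c list \<Rightarrow> ('c \<Rightarrow> 'c) \<Rightarrow> ('c \<Rightarrow> 'c)" where
  "iter_comm R fs d = foldr (lie_comm R) fs d"

definition diff_ops_order :: "('c, 'm) ring_scheme \<Rightarrow> ('k \<Rightarrow> 'c) \<Rightarrow> 'c \<Rightarrow> nat \<Rightarrow> ('c \<Rightarrow> 'c) set" where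
  "diff_ops_order R \<iota> \<tau> m = {d \<in> End_kn R \<iota> \<tau>. \<forall>fs. set fs \<subseteq> carrier R \<longrightarrow> length fs = Suc m
      \<longrightarrow> iter_comm R fs d = (\<lambda>x\<in>carrier R. \<zero>\<^bsub>R\<^esub>)}"

definition diff_ops :: "('c, 'm) ring_scheme \<Rightarrow> ('k \<Rightarrow> 'c) \<Rightarrow> 'c \<Rightarrow> ('c \<Rightarrow> 'c) set" where
  "diff_ops R \<iota> \<tau> = (\<Union>m. diff_ops_order R \<iota> \<tau> m)"

text \<open>Elements of the associated graded of a decreasing filtration F 0 \<supseteq> F 1 \<supseteq> ...:
  sequences whose i-th entry is a coset of F (i+1) inside F i.\<close>
definition gr_pieces :: "(nat \<Rightarrow> 'a::ab_group_add set) \<Rightarrow> (nat \<Rightarrow> 'a set) set" where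
  "gr_pieces F = {g. \<forall>i. \<exists>x\<in>F i. g i = (+) x ` F (Suc i)}"

definition rep :: "'a set \<Rightarrow> 'a" where
  "rep S = (SOME x. x \<in> S)"

definition tpow :: "'b::ring_1 \<Rightarrow> nat \<Rightarrow> 'b set" where
  "tpow t i = range (\<lambda>b. t ^ i * b)"

definition gr_ring :: "'b::ring_1 \<Rightarrow> (nat \<Rightarrow> 'b set) ring" where
  "gr_ring t = \<lparr>carrier = gr_pieces (tpow t),
     mult = (\<lambda>g h m. (+) (\<Sum>i\<le>m. rep (g i) * rep (h (m - i))) ` tpow t (Suc m)),
     one = (\<lambda>i. (+) (if i = 0 then 1 else 0) ` tpow t (Suc i)),
     zero = (\<lambda>i. tpow t (Suc i)),
     add = (\<lambda>g h i. (+) (rep (g i) + rep (h i)) ` tpow t (Suc i))\<rparr>"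

definition gr_scalar :: "('k \<Rightarrow> 'b::ring_1) \<Rightarrow> 'b \<Rightarrow> 'k \<Rightarrow> (nat \<Rightarrow> 'b set)" where
  "gr_scalar \<iota> t c = (\<lambda>i. (+) (if i = 0 then \<iota> c else 0) ` tpow t (Suc i))"

definition gr_t :: "'b::ring_1 \<Rightarrow> (nat \<Rightarrow> 'b set)" where
  "gr_t t = (\<lambda>i. (+) (if i = 1 then t else 0) ` tpow t (Suc i))"

definition filt_D :: "('k::field \<Rightarrow> 'b::ring_1) \<Rightarrow> 'b \<Rightarrow> nat \<Rightarrow> ('b \<Rightarrow> 'b) set" where
  "filt_D \<iota> t i = (\<lambda>d. (\<lambda>x. t ^ i * d x)) ` diff_ops (type_ring :: 'b ring) \<iota> t"

definition gr_D :: "('k::field \<Rightarrow> 'b::ring_1) \<Rightarrow> 'b \<Rightarrow> (nat \<Rightarrow> ('b \<Rightarrow> 'b) set) set" where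
  "gr_D \<iota> t = gr_pieces (filt_D \<iota> t)"

text \<open>gamma: the class of d_i in t^i D(B) acts t^j B/t^(j+1) B \<rightarrow> t^(i+j) B/t^(i+j+1) B
  as induced by d_i; an element of gr D(B) acts by the sum of its components.\<close>
definition gamma :: "'b::ring_1 \<Rightarrow> (nat \<Rightarrow> ('b \<Rightarrow> 'b) set) \<Rightarrow> (nat \<Rightarrow> 'b set) \<Rightarrow> (nat \<Rightarrow> 'b set)" where
  "gamma t G = (\<lambda>g\<in>carrier (gr_ring t).
     \<lambda>m. (+) (\<Sum>i\<le>m. rep (G i) (rep (g (m - i)))) ` tpow t (Suc m))"

section \<open>A \<otimes>_k k_n = A[t]/(t^(n+1))\<close>

definition tensor_kn :: "nat \<Rightarrow> (nat \<Rightarrow> 'a::comm_ring_1) ring" where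
  "tensor_kn n = \<lparr>carrier = {a. \<forall>i>n. a i = 0},
     mult = (\<lambda>a b m. if m \<le> n then (\<Sum>i\<le>m. a i * b (m - i)) else 0),
     one = (\<lambda>i. if i = 0 then 1 else 0),
     zero = (\<lambda>i. 0),
     add = (\<lambda>a b i. a i + b i)\<rparr>"

definition scalar_kn :: "('k \<Rightarrow> 'a::comm_ring_1) \<Rightarrow> 'k \<Rightarrow> (nat \<Rightarrow> 'a)" where
  "scalar_kn \<iota>A c = (\<lambda>i. if i = 0 then \<iota>A c else 0)"

definition t_kn :: "nat \<Rightarrow> (nat \<Rightarrow> 'a::comm_ring_1)" where
  "t_kn n = (\<lambda>i. if i = 1 \<and> 1 \<le> n then 1 else 0)"

definition gr_iso_tensor :: "('k::field \<Rightarrow> 'a::comm_ring_1) \<Rightarrow> ('k \<Rightarrow> 'b::ring_1) \<Rightarrow> 'b \<Rightarrow> nat \<Rightarrow> bool" where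
  "gr_iso_tensor \<iota>A \<iota> t n \<longleftrightarrow> (\<exists>\<psi>. \<psi> \<in> ring_hom (gr_ring t) (tensor_kn n)
     \<and> bij_betw \<psi> (carrier (gr_ring t)) (carrier (tensor_kn n))
     \<and> (\<forall>c. \<psi> (gr_scalar \<iota> t c) = scalar_kn \<iota>A c) \<and> \<psi> (gr_t t) = t_kn n)"

end

theory Submission
  imports Defs
begin


lemma coset_sub:
  fixes S :: "'a::ab_group_add set"
  assumes Sadd: "\<And>x y. x \<in> S \<Longrightarrow> y \<in> S \<Longrightarrow> x + y \<in> S"
    and h: "x - y \<in> S"
  shows "(+) x ` S \<subseteq> (+) y ` S"
proof
  fix z assume "z \<in> (+) x ` S"
  then obtain s where s: "s \<in> S" "z = x + s" by auto
  have "z = y + ((x - y) + s)" using s by simp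
  moreover have "(x - y) + s \<in> S" using Sadd h s by blast
  ultimately show "z \<in> (+) y ` S" by blast
qed

lemma coset_eq_iff:
  fixes S :: "'a::ab_group_add set"
  assumes S0: "0 \<in> S" and Sadd: "\<And>x y. x \<in> S \<Longrightarrow> y \<in> S \<Longrightarrow> x + y \<in> S"
    and Sneg: "\<And>x. x \<in> S \<Longrightarrow> - x \<in> S"
  shows "((+) x ` S = (+) y ` S) \<longleftrightarrow> x - y \<in> S"
proof
  assume h: "(+) x ` S = (+) y ` S"
  have "x + 0 \<in> (+) x ` S" using S0 by (rule imageI)
  then have "x \<in> (+) y ` S" using h by simp
  then obtain s where "s \<in> S" "x = y + s" by auto
  thus "x - y \<in> S" by simp
next
  assume h: "x - y \<in> S"
  have h2: "y - x \<in> S" using Sneg[OF h] by simp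
  show "(+) x ` S = (+) y ` S"
    using coset_sub[of S x y, OF Sadd h] coset_sub[of S y x, OF Sadd h2] by blast
qed

lemma rep_in: "x \<in> S \<Longrightarrow> rep S \<in> S"
  unfolding rep_def by (rule someI)

lemma rep_coset:
  fixes S :: "'a::ab_group_add set"
  assumes "0 \<in> S"
  shows "rep ((+) x ` S) - x \<in> S"
proof -
  have "x + 0 \<in> (+) x ` S" using assms by (rule imageI)
  then have "x \<in> (+) x ` S" by simp
  then have "rep ((+) x ` S) \<in> (+) x ` S" by (rule rep_in)
  then show ?thesis by auto
qed

locale Bctx =
  fixes \<iota> :: "'k::field \<Rightarrow> 'b::ring_1" and t :: 'b and n :: nat
  assumes kn: "kn_algebra_str \<iota> t n"
begin

lemma t_comm: "t * x = x * t"
  using kn unfolding kn_algebra_str_def by auto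

lemma tpow_comm: "t ^ i * x = x * t ^ i"
  by (rule power_commuting_commutes) (simp add: t_comm)

lemma t_nil: "t ^ Suc n = 0"
  using kn unfolding kn_algebra_str_def by auto

lemma t_big: "n < i \<Longrightarrow> t ^ i = 0"
proof -
  assume "n < i"
  then obtain j where "i = Suc n + j" using less_iff_Suc_add by auto
  then have "t ^ i = t ^ Suc n * t ^ j" by (simp only: power_add)
  then show ?thesis by (simp only: t_nil mult_zero_left)
qed

lemma kalg: "k_algebra_str \<iota>"
  using kn unfolding kn_algebra_str_def by auto

lemma iota_comm: "\<iota> c * x = x * \<iota> c"
  using kalg unfolding k_algebra_str_def by auto

lemma tpow_left: "y * (t ^ i * x) = t ^ i * (y * x)"
proof -
  have "y * (t ^ i * x) = (y * t ^ i) * x" by (simp only: mult.assoc)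
  also have "\<dots> = (t ^ i * y) * x" by (simp only: tpow_comm)
  finally show ?thesis by (simp only: mult.assoc)
qed

lemma iota_tpow: "\<iota> c * (t ^ i * x) = t ^ i * (\<iota> c * x)"
  by (rule tpow_left)

abbreviation T where "T i \<equiv> tpow t i"

lemma T_iff: "x \<in> T i \<longleftrightarrow> (\<exists>b. x = t ^ i * b)"
  unfolding tpow_def by auto

lemma T_I: "t ^ i * b \<in> T i"
  unfolding T_iff by auto

lemma T_0[simp]: "0 \<in> T i"
  unfolding T_iff by (rule exI[of _ 0]) simp

lemma T_add: "x \<in> T i \<Longrightarrow> y \<in> T i \<Longrightarrow> x + y \<in> T i"
proof -
  assume "x \<in> T i" "y \<in> T i"
  then obtain a b where "x = t ^ i * a" "y = t ^ i * b" unfolding T_iff by blast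
  then have "x + y = t ^ i * (a + b)" by (simp add: distrib_left)
  then show ?thesis unfolding T_iff by blast
qed

lemma T_uminus: "x \<in> T i \<Longrightarrow> - x \<in> T i"
proof -
  assume "x \<in> T i"
  then obtain a where "x = t ^ i * a" unfolding T_iff by blast
  then have "- x = t ^ i * (- a)" by simp
  then show ?thesis unfolding T_iff by blast
qed

lemma T_diff: "x \<in> T i \<Longrightarrow> y \<in> T i \<Longrightarrow> x - y \<in> T i"
  using T_add[of x i "- y"] T_uminus[of y i] by simp

lemma T_mult_left: "x \<in> T i \<Longrightarrow> y * x \<in> T i"
proof -
  assume "x \<in> T i"
  then obtain a where "x = t ^ i * a" unfolding T_iff by blast
  then have "y * x = t ^ i * (y * a)" by (simp only: tpow_left)
  then show ?thesis unfolding T_iff by blast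
qed

lemma T_mult_right: "x \<in> T i \<Longrightarrow> x * y \<in> T i"
proof -
  assume "x \<in> T i"
  then obtain a where "x = t ^ i * a" unfolding T_iff by blast
  then have "x * y = t ^ i * (a * y)" by (simp only: mult.assoc)
  then show ?thesis unfolding T_iff by blast
qed

lemma T_mult: "x \<in> T i \<Longrightarrow> y \<in> T j \<Longrightarrow> x * y \<in> T (i + j)"
  unfolding T_iff
proof -
  assume "\<exists>b. x = t ^ i * b" "\<exists>b. y = t ^ j * b"
  then obtain a b where ab: "x = t ^ i * a" "y = t ^ j * b" by auto
  have "x * y = t ^ (i + j) * (a * b)"
  proof -
    have "x * y = t ^ i * (a * (t ^ j * b))" unfolding ab by (simp only: mult.assoc)
    also have "a * (t ^ j * b) = t ^ j * (a * b)" by (rule tpow_left)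
    finally show ?thesis by (simp only: power_add mult.assoc)
  qed
  then show "\<exists>b. x * y = t ^ (i + j) * b" by auto
qed

lemma T_tpow: "x \<in> T i \<Longrightarrow> t ^ j * x \<in> T (j + i)"
  using T_mult[of "t^j" j x i] T_I[of j 1] by simp

lemma T_t: "x \<in> T i \<Longrightarrow> t * x \<in> T (Suc i)"
  using T_tpow[of x i 1] by simp

lemma T_mono: "i \<le> j \<Longrightarrow> x \<in> T j \<Longrightarrow> x \<in> T i"
proof -
  assume ij: "i \<le> j" and "x \<in> T j"
  then obtain b where xb: "x = t ^ j * b" unfolding T_iff by auto
  have "t ^ j = t ^ i * t ^ (j - i)" using ij by (simp add: power_add[symmetric])
  then have "x = t ^ i * (t ^ (j - i) * b)" using xb by (simp only: mult.assoc)
  then show ?thesis unfolding T_iff by blast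
qed

lemma T_Suc: "x \<in> T (Suc i) \<Longrightarrow> x \<in> T i"
  by (rule T_mono[of i "Suc i"]) auto

lemma T_big: "n < i \<Longrightarrow> x \<in> T i \<longleftrightarrow> x = 0"
  unfolding T_iff using t_big by auto

lemma T_sum: "finite S \<Longrightarrow> (\<And>x. x \<in> S \<Longrightarrow> f x \<in> T i) \<Longrightarrow> sum f S \<in> T i"
  by (induction S rule: finite_induct) (auto intro: T_add)

lemma T_sum': "(\<And>x. x \<in> S \<Longrightarrow> f x \<in> T i) \<Longrightarrow> sum f S \<in> T i"
  by (cases "finite S") (auto intro: T_sum)

lemma T_coset_eq: "((+) x ` T i = (+) y ` T i) \<longleftrightarrow> x - y \<in> T i"
  by (rule coset_eq_iff) (auto intro: T_add T_uminus)

lemma T_rep: "rep ((+) x ` T i) - x \<in> T i"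
  by (rule rep_coset) simp

end



definition lc :: "'b::ring_1 \<Rightarrow> ('b \<Rightarrow> 'b) \<Rightarrow> 'b \<Rightarrow> 'b" where
  "lc f d = (\<lambda>x. f * d x - d (f * x))"

lemma type_ring_simps[simp]:
  "carrier (type_ring :: 'b::ring_1 ring) = UNIV"
  "mult (type_ring :: 'b::ring_1 ring) = (*)"
  "add (type_ring :: 'b::ring_1 ring) = (+)"
  "zero (type_ring :: 'b::ring_1 ring) = 0"
  "one (type_ring :: 'b::ring_1 ring) = 1"
  by (simp_all add: type_ring_def)

lemma type_ring_inv: "a_inv (type_ring :: 'b::ring_1 ring) y = - y"
proof -
  have "a_inv (type_ring :: 'b::ring_1 ring) y = (THE z. z \<in> UNIV \<and> y + z = 0 \<and> z + y = 0)"
    unfolding a_inv_def m_inv_def by simp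
  also have "\<dots> = - y"
  proof (rule the_equality)
    show "- y \<in> UNIV \<and> y + - y = 0 \<and> - y + y = 0" by simp
  next
    fix z assume "z \<in> UNIV \<and> y + z = 0 \<and> z + y = 0"
    then show "z = - y" by (simp add: eq_neg_iff_add_eq_0)
  qed
  finally show ?thesis .
qed

lemma type_ring_minus: "a_minus (type_ring :: 'b::ring_1 ring) x y = x - y"
  unfolding a_minus_def type_ring_inv by simp

lemma type_ring_lie: "lie_comm (type_ring :: 'b::ring_1 ring) f d = lc f d"
  unfolding lie_comm_def lc_def by (simp add: type_ring_minus restrict_def)

lemma type_ring_iter: "iter_comm (type_ring :: 'b::ring_1 ring) fs d = foldr lc fs d"
  unfolding iter_comm_def
  by (induction fs) (simp_all add: type_ring_lie)

lemma lc_zero[simp]: "lc f 0 = 0"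
  unfolding lc_def by (simp add: fun_eq_iff)

lemma lc_zero'[simp]: "lc f (\<lambda>x. 0) = (\<lambda>x. 0)"
  unfolding lc_def by (simp add: fun_eq_iff)

lemma lc_add: "lc f (d1 + d2) = lc f d1 + lc f d2"
  unfolding lc_def by (simp add: fun_eq_iff algebra_simps)

lemma lc_uminus: "lc f (- d) = - lc f d"
  unfolding lc_def by (simp add: fun_eq_iff algebra_simps)

lemma foldr_lc_add: "foldr lc fs (d1 + d2) = foldr lc fs d1 + foldr lc fs d2"
proof (induction fs)
  case Nil then show ?case by simp
next
  case (Cons f fs)
  have "foldr lc (f # fs) (d1 + d2) = lc f (foldr lc fs (d1 + d2))" by simp
  also have "\<dots> = lc f (foldr lc fs d1 + foldr lc fs d2)" by (simp only: Cons.IH)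
  also have "\<dots> = lc f (foldr lc fs d1) + lc f (foldr lc fs d2)" by (rule lc_add)
  finally show ?case by (simp only: foldr.simps o_def)
qed

lemma foldr_lc_uminus: "foldr lc fs (- d) = - foldr lc fs d"
proof (induction fs)
  case Nil then show ?case by simp
next
  case (Cons f fs)
  have "foldr lc (f # fs) (- d) = lc f (foldr lc fs (- d))" by simp
  also have "\<dots> = lc f (- foldr lc fs d)" by (simp only: Cons.IH)
  also have "\<dots> = - lc f (foldr lc fs d)" by (rule lc_uminus)
  finally show ?case by (simp only: foldr.simps o_def)
qed

lemma foldr_lc_zero: "foldr lc fs 0 = 0"
  by (induction fs) (simp_all add: zero_fun_def)

context Bctx
begin

definition endo :: "('b \<Rightarrow> 'b) \<Rightarrow> bool" where
  "endo d \<longleftrightarrow> (\<forall>x y. d (x + y) = d x + d y) \<and> (\<forall>c x. d (\<iota> c * x) = \<iota> c * d x)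
     \<and> (\<forall>x. d (t * x) = t * d x)"

definition Dm :: "nat \<Rightarrow> ('b \<Rightarrow> 'b) set" where
  "Dm m = {d. endo d \<and> (\<forall>fs. length fs = Suc m \<longrightarrow> foldr lc fs d = 0)}"

definition DB :: "('b \<Rightarrow> 'b) set" where
  "DB = (\<Union>m. Dm m)"

lemma End_type: "End_kn (type_ring :: 'b ring) \<iota> t = {d. endo d}"
  unfolding End_kn_def endo_def by (auto simp: extensional_def)

lemma diff_ops_order_type: "diff_ops_order (type_ring :: 'b ring) \<iota> t m = Dm m"
  unfolding diff_ops_order_def Dm_def End_type type_ring_iter
  by (auto simp: zero_fun_def)

lemma diff_ops_type: "diff_ops (type_ring :: 'b ring) \<iota> t = DB"
  unfolding diff_ops_def DB_def diff_ops_order_type by simp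

lemma endo_add: "endo d \<Longrightarrow> d (x + y) = d x + d y"
  unfolding endo_def by auto
lemma endo_iota: "endo d \<Longrightarrow> d (\<iota> c * x) = \<iota> c * d x"
  unfolding endo_def by auto
lemma endo_t: "endo d \<Longrightarrow> d (t * x) = t * d x"
  unfolding endo_def by auto
lemma endo_0: "endo d \<Longrightarrow> d 0 = 0"
  using endo_add[of d 0 0] by simp
lemma endo_uminus: "endo d \<Longrightarrow> d (- x) = - d x"
  using endo_add[of d x "- x"] endo_0[of d] by (simp add: eq_neg_iff_add_eq_0 add.commute)
lemma endo_diff: "endo d \<Longrightarrow> d (x - y) = d x - d y"
  using endo_add[of d x "- y"] endo_uminus[of d y] by simp
lemma endo_sum: "endo d \<Longrightarrow> d (sum f S) = (\<Sum>i\<in>S. d (f i))"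
  by (induction S rule: infinite_finite_induct) (simp_all add: endo_0 endo_add)
lemma endo_tpow: "endo d \<Longrightarrow> d (t ^ k * x) = t ^ k * d x"
proof (induction k)
  case 0 then show ?case by simp
next
  case (Suc k)
  have "d (t ^ Suc k * x) = d (t * (t ^ k * x))" by (simp add: mult.assoc)
  also have "\<dots> = t * d (t ^ k * x)" using Suc.prems by (rule endo_t)
  also have "\<dots> = t ^ Suc k * d x" using Suc by (simp add: mult.assoc)
  finally show ?case .
qed

lemma endo_T: "endo d \<Longrightarrow> (\<And>y. d y \<in> T i) \<Longrightarrow> x \<in> T p \<Longrightarrow> d x \<in> T (p + i)"
proof -
  assume e: "endo d" and r: "\<And>y. d y \<in> T i" and "x \<in> T p"
  then obtain b where "x = t ^ p * b" unfolding T_iff by auto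
  then have "d x = t ^ p * d b" using endo_tpow[OF e] by simp
  then show ?thesis using T_tpow[OF r[of b]] by simp
qed

lemma endo_zero_fun: "endo 0"
  unfolding endo_def by simp

lemma endo_plus: "endo d1 \<Longrightarrow> endo d2 \<Longrightarrow> endo (d1 + d2)"
  unfolding endo_def by (simp add: algebra_simps)

lemma endo_uminus_fun: "endo d \<Longrightarrow> endo (- d)"
  unfolding endo_def by (simp add: algebra_simps)

lemma iota_left: "y * (\<iota> c * x) = \<iota> c * (y * x)"
proof -
  have "y * (\<iota> c * x) = (y * \<iota> c) * x" by (simp only: mult.assoc)
  also have "\<dots> = (\<iota> c * y) * x" using iota_comm[of c y] by simp
  finally show ?thesis by (simp only: mult.assoc)
qed

lemma t_left: "y * (t * x) = t * (y * x)"
  using tpow_left[of y 1 x] by simp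

lemma t_tpow: "t * (t ^ k * y) = t ^ k * (t * y)"
  by (simp only: mult.assoc[symmetric] power_Suc[symmetric] power_Suc2[symmetric])

lemma endo_tmul: "endo d \<Longrightarrow> endo (\<lambda>x. t ^ k * d x)"
proof -
  assume e: "endo d"
  have 1: "t ^ k * d (x + y) = t ^ k * d x + t ^ k * d y" for x y
    using e by (simp add: endo_add distrib_left)
  have 2: "t ^ k * d (\<iota> c * x) = \<iota> c * (t ^ k * d x)" for c x
    using e by (simp add: endo_iota iota_tpow)
  have 3: "t ^ k * d (t * x) = t * (t ^ k * d x)" for x
    using e by (simp add: endo_t t_tpow)
  show ?thesis unfolding endo_def using 1 2 3 by blast
qed

lemma endo_lc: "endo d \<Longrightarrow> endo (lc f d)"
proof -
  assume e: "endo d"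
  have 1: "lc f d (x + y) = lc f d x + lc f d y" for x y
    unfolding lc_def using e by (simp add: endo_add distrib_left)
  have 2: "lc f d (\<iota> c * x) = \<iota> c * lc f d x" for c x
  proof -
    have "lc f d (\<iota> c * x) = f * (\<iota> c * d x) - \<iota> c * d (f * x)"
      unfolding lc_def using e by (simp add: endo_iota iota_left)
    also have "\<dots> = \<iota> c * lc f d x"
      unfolding lc_def by (simp add: right_diff_distrib iota_left)
    finally show ?thesis .
  qed
  have 3: "lc f d (t * x) = t * lc f d x" for x
  proof -
    have "lc f d (t * x) = f * (t * d x) - t * d (f * x)"
      unfolding lc_def using e by (simp add: endo_t t_left)
    also have "\<dots> = t * lc f d x"
      unfolding lc_def by (simp add: right_diff_distrib t_left)
    finally show ?thesis .
  qed
  show ?thesis unfolding endo_def using 1 2 3 by blast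
qed

lemma Dm_endo: "d \<in> Dm m \<Longrightarrow> endo d"
  unfolding Dm_def by auto

lemma Dm_zero: "0 \<in> Dm m"
  unfolding Dm_def by (simp add: endo_zero_fun foldr_lc_zero)

lemma Dm_plus: "d1 \<in> Dm m \<Longrightarrow> d2 \<in> Dm m \<Longrightarrow> d1 + d2 \<in> Dm m"
  unfolding Dm_def by (simp add: endo_plus foldr_lc_add)

lemma Dm_uminus: "d \<in> Dm m \<Longrightarrow> - d \<in> Dm m"
  unfolding Dm_def by (simp add: endo_uminus_fun foldr_lc_uminus)

lemma Dm_minus: "d1 \<in> Dm m \<Longrightarrow> d2 \<in> Dm m \<Longrightarrow> d1 - d2 \<in> Dm m"
  using Dm_plus[of d1 m "- d2"] Dm_uminus[of d2 m] by simp

lemma Dm_lc0: "d \<in> Dm 0 \<Longrightarrow> lc f d = 0"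
proof -
  assume "d \<in> Dm 0"
  then have "\<forall>fs. length fs = Suc 0 \<longrightarrow> foldr lc fs d = 0" unfolding Dm_def by blast
  then have "foldr lc [f] d = 0" by (metis length_Cons list.size(3))
  then show ?thesis by simp
qed

lemma Dm_lc: "d \<in> Dm (Suc m) \<Longrightarrow> lc f d \<in> Dm m"
proof -
  assume d: "d \<in> Dm (Suc m)"
  have "foldr lc fs (lc f d) = 0" if "length fs = Suc m" for fs
  proof -
    have "foldr lc fs (lc f d) = foldr lc (fs @ [f]) d" by simp
    also have "\<dots> = 0"
    proof -
      have "length (fs @ [f]) = Suc (Suc m)" using that by simp
      moreover have "\<forall>fs. length fs = Suc (Suc m) \<longrightarrow> foldr lc fs d = 0" using d unfolding Dm_def by blast
      ultimately show ?thesis by blast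
    qed
    finally show ?thesis .
  qed
  then show ?thesis using endo_lc[OF Dm_endo[OF d]] unfolding Dm_def by auto
qed

lemma Dm_Suc: "d \<in> Dm m \<Longrightarrow> d \<in> Dm (Suc m)"
proof -
  assume d: "d \<in> Dm m"
  have "foldr lc fs d = 0" if h: "length fs = Suc (Suc m)" for fs
  proof -
    obtain f fs' where ff: "fs = f # fs'" "length fs' = Suc m" using h by (cases fs) auto
    have "foldr lc fs' d = 0" using d ff(2) unfolding Dm_def by blast
    then show ?thesis using ff(1) by (simp add: zero_fun_def)
  qed
  then show ?thesis using Dm_endo[OF d] unfolding Dm_def by auto
qed

lemma Dm_mono: "m \<le> m' \<Longrightarrow> d \<in> Dm m \<Longrightarrow> d \<in> Dm m'"
  by (induction m' rule: dec_induct) (auto intro: Dm_Suc)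

lemma foldr_lc_tmul: "foldr lc fs (\<lambda>x. t ^ k * d x) = (\<lambda>x. t ^ k * foldr lc fs d x)"
proof (induction fs)
  case Nil then show ?case by simp
next
  case (Cons f fs)
  have "foldr lc (f # fs) (\<lambda>x. t ^ k * d x) = lc f (foldr lc fs (\<lambda>x. t ^ k * d x))" by simp
  also have "\<dots> = lc f (\<lambda>x. t ^ k * foldr lc fs d x)" by (simp only: Cons.IH)
  also have "\<dots> = (\<lambda>x. t ^ k * lc f (foldr lc fs d) x)"
    unfolding lc_def by (simp add: tpow_left right_diff_distrib)
  finally show ?case by simp
qed

lemma Dm_tmul: "d \<in> Dm m \<Longrightarrow> (\<lambda>x. t ^ k * d x) \<in> Dm m"
  unfolding Dm_def by (auto simp: endo_tmul foldr_lc_tmul zero_fun_def)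

lemma Dm_sum: "finite S \<Longrightarrow> (\<And>i. i \<in> S \<Longrightarrow> f i \<in> Dm m) \<Longrightarrow> (\<lambda>x. \<Sum>i\<in>S. f i x) \<in> Dm m"
proof (induction S rule: finite_induct)
  case empty then show ?case using Dm_zero by (simp add: zero_fun_def)
next
  case (insert a S)
  have "(\<lambda>x. \<Sum>i\<in>insert a S. f i x) = f a + (\<lambda>x. \<Sum>i\<in>S. f i x)"
    using insert by (simp add: fun_eq_iff)
  then show ?case using insert by (simp add: Dm_plus)
qed

lemma DB_iff: "d \<in> DB \<longleftrightarrow> (\<exists>m. d \<in> Dm m)"
  unfolding DB_def by auto

lemma DB_zero: "0 \<in> DB"
  using Dm_zero unfolding DB_def by auto

lemma DB_plus: "d1 \<in> DB \<Longrightarrow> d2 \<in> DB \<Longrightarrow> d1 + d2 \<in> DB"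
proof -
  assume "d1 \<in> DB" "d2 \<in> DB"
  then obtain m1 m2 where "d1 \<in> Dm m1" "d2 \<in> Dm m2" unfolding DB_iff by auto
  then have "d1 \<in> Dm (max m1 m2)" "d2 \<in> Dm (max m1 m2)"
    using Dm_mono[of m1 "max m1 m2" d1] Dm_mono[of m2 "max m1 m2" d2] by auto
  then show ?thesis unfolding DB_iff by (blast intro: Dm_plus)
qed

lemma DB_uminus: "d \<in> DB \<Longrightarrow> - d \<in> DB"
  unfolding DB_iff by (auto intro: Dm_uminus)

lemma DB_minus: "d1 \<in> DB \<Longrightarrow> d2 \<in> DB \<Longrightarrow> d1 - d2 \<in> DB"
  using DB_plus[of d1 "- d2"] DB_uminus[of d2] by simp

lemma DB_tmul: "d \<in> DB \<Longrightarrow> (\<lambda>x. t ^ k * d x) \<in> DB"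
  unfolding DB_iff by (auto intro: Dm_tmul)

lemma DB_endo: "d \<in> DB \<Longrightarrow> endo d"
  unfolding DB_iff by (auto intro: Dm_endo)

lemma finite_max_order:
  fixes N :: nat
  assumes "\<And>i. i \<le> N \<Longrightarrow> f i \<in> DB"
  shows "\<exists>M. \<forall>i\<le>N. f i \<in> Dm M"
  using assms
proof (induction N)
  case 0 then show ?case unfolding DB_iff by auto
next
  case (Suc N)
  then obtain M where M: "\<forall>i\<le>N. f i \<in> Dm M" by auto
  obtain M' where M': "f (Suc N) \<in> Dm M'" using Suc.prems[of "Suc N"] unfolding DB_iff by auto
  have "\<forall>i\<le>Suc N. f i \<in> Dm (max M M')"
  proof (intro allI impI)
    fix i assume "i \<le> Suc N"
    then show "f i \<in> Dm (max M M')"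
    proof (cases "i \<le> N")
      case True then show ?thesis using M Dm_mono[of M "max M M'" "f i"] by auto
    next
      case False then have "i = Suc N" using \<open>i \<le> Suc N\<close> by simp
      then show ?thesis using M' Dm_mono[of M' "max M M'" "f i"] by auto
    qed
  qed
  then show ?case by blast
qed

end



context Bctx
begin

abbreviation R where "R \<equiv> gr_ring t"

definition cls :: "(nat \<Rightarrow> 'b) \<Rightarrow> nat \<Rightarrow> 'b set" where
  "cls x = (\<lambda>i. (+) (x i) ` T (Suc i))"

definition gseq :: "(nat \<Rightarrow> 'b) \<Rightarrow> bool" where
  "gseq x \<longleftrightarrow> (\<forall>i. x i \<in> T i)"

lemma R_carrier: "carrier R = gr_pieces T"
  by (simp add: gr_ring_def)

lemma carrier_iff: "g \<in> carrier R \<longleftrightarrow> (\<forall>i. \<exists>x\<in>T i. g i = (+) x ` T (Suc i))"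
  by (simp add: gr_ring_def gr_pieces_def)

lemma cls_eq: "cls x = cls y \<longleftrightarrow> (\<forall>i. x i - y i \<in> T (Suc i))"
  unfolding cls_def fun_eq_iff T_coset_eq by simp

lemma cls_eqI: "(\<And>i. x i - y i \<in> T (Suc i)) \<Longrightarrow> cls x = cls y"
  using cls_eq by blast

lemma cls_carrier: "gseq x \<Longrightarrow> cls x \<in> carrier R"
  unfolding carrier_iff gseq_def cls_def by blast

lemma rep_cls: "rep (cls x i) - x i \<in> T (Suc i)"
  unfolding cls_def by (rule T_rep)

lemma T0: "x \<in> T 0"
  unfolding T_iff by simp

lemma carrier_cls: "g \<in> carrier R \<Longrightarrow> g = cls (\<lambda>i. rep (g i))"
proof -
  assume g: "g \<in> carrier R"
  have "g i = cls (\<lambda>i. rep (g i)) i" for i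
  proof -
    obtain x where x: "x \<in> T i" "g i = (+) x ` T (Suc i)" using g unfolding carrier_iff by blast
    have "rep (g i) - x \<in> T (Suc i)" unfolding x(2) by (rule T_rep)
    then have "(+) (rep (g i)) ` T (Suc i) = (+) x ` T (Suc i)" by (simp only: T_coset_eq)
    then show ?thesis unfolding cls_def using x(2) by simp
  qed
  then show ?thesis by blast
qed

lemma carrier_gseq: "g \<in> carrier R \<Longrightarrow> gseq (\<lambda>i. rep (g i))"
proof -
  assume g: "g \<in> carrier R"
  have "rep (g i) \<in> T i" for i
  proof -
    obtain x where x: "x \<in> T i" "g i = (+) x ` T (Suc i)" using g unfolding carrier_iff by blast
    have "rep (g i) - x \<in> T (Suc i)" unfolding x(2) by (rule T_rep)
    then have "rep (g i) - x \<in> T i" by (rule T_Suc)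
    then have "(rep (g i) - x) + x \<in> T i" using x(1) by (rule T_add)
    then show ?thesis by simp
  qed
  then show ?thesis unfolding gseq_def by blast
qed

lemma carrier_obtain: "g \<in> carrier R \<Longrightarrow> \<exists>x. gseq x \<and> g = cls x"
  using carrier_cls carrier_gseq by blast

lemma gseq_rep_cls: "gseq x \<Longrightarrow> gseq (\<lambda>i. rep (cls x i))"
  using carrier_gseq[OF cls_carrier] by blast

lemma rep_cls_T: "gseq x \<Longrightarrow> rep (cls x i) \<in> T i"
  using gseq_rep_cls unfolding gseq_def by blast

lemma zero_R: "\<zero>\<^bsub>R\<^esub> = cls (\<lambda>_. 0)"
  unfolding cls_def by (simp add: gr_ring_def)

lemma add_cls: "cls x \<oplus>\<^bsub>R\<^esub> cls y = cls (\<lambda>i. x i + y i)"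
proof -
  have "cls x \<oplus>\<^bsub>R\<^esub> cls y = cls (\<lambda>i. rep (cls x i) + rep (cls y i))"
    unfolding cls_def[of "\<lambda>i. rep (cls x i) + rep (cls y i)"] by (simp add: gr_ring_def)
  also have "\<dots> = cls (\<lambda>i. x i + y i)"
  proof (rule cls_eqI)
    fix i
    have eq: "rep (cls x i) + rep (cls y i) - (x i + y i) = (rep (cls x i) - x i) + (rep (cls y i) - y i)"
      by simp
    show "rep (cls x i) + rep (cls y i) - (x i + y i) \<in> T (Suc i)"
      unfolding eq by (rule T_add[OF rep_cls[of x i] rep_cls[of y i]])
  qed
  finally show ?thesis .
qed

lemma gseq_add: "gseq x \<Longrightarrow> gseq y \<Longrightarrow> gseq (\<lambda>i. x i + y i)"
  unfolding gseq_def by (auto intro: T_add)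

lemma gseq_uminus: "gseq x \<Longrightarrow> gseq (\<lambda>i. - x i)"
  unfolding gseq_def by (auto intro: T_uminus)

lemma gseq_diff: "gseq x \<Longrightarrow> gseq y \<Longrightarrow> gseq (\<lambda>i. x i - y i)"
  unfolding gseq_def by (auto intro: T_diff)

lemma gseq_zero: "gseq (\<lambda>_. 0)"
  unfolding gseq_def by simp

lemma prod_err:
  assumes "a \<in> T i" "a - a' \<in> T (Suc i)" "b - b' \<in> T (Suc j)" "b' \<in> T j"
  shows "a * b - a' * b' \<in> T (Suc (i + j))"
proof -
  have "a * b - a' * b' = a * (b - b') + (a - a') * b'" by (simp add: algebra_simps)
  moreover have "a * (b - b') \<in> T (Suc (i + j))" using T_mult[OF assms(1) assms(3)] by simp
  moreover have "(a - a') * b' \<in> T (Suc (i + j))" using T_mult[OF assms(2) assms(4)] by simp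
  ultimately show ?thesis by (simp add: T_add)
qed

lemma mult_cls:
  assumes x: "gseq x" and y: "gseq y"
  shows "cls x \<otimes>\<^bsub>R\<^esub> cls y = cls (\<lambda>m. \<Sum>i\<le>m. x i * y (m - i))"
proof -
  have "cls x \<otimes>\<^bsub>R\<^esub> cls y = cls (\<lambda>m. \<Sum>i\<le>m. rep (cls x i) * rep (cls y (m - i)))"
    unfolding cls_def[of "\<lambda>m. \<Sum>i\<le>m. rep (cls x i) * rep (cls y (m - i))"] by (simp add: gr_ring_def)
  also have "\<dots> = cls (\<lambda>m. \<Sum>i\<le>m. x i * y (m - i))"
  proof (rule cls_eqI)
    fix m
    have "rep (cls x i) * rep (cls y (m - i)) - x i * y (m - i) \<in> T (Suc m)" if "i \<in> {..m}" for i
    proof -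
      have "rep (cls x i) * rep (cls y (m - i)) - x i * y (m - i) \<in> T (Suc (i + (m - i)))"
        by (rule prod_err[OF rep_cls_T[OF x] rep_cls rep_cls]) (use y in \<open>simp add: gseq_def\<close>)
      then show ?thesis using that by simp
    qed
    then have "(\<Sum>i\<le>m. rep (cls x i) * rep (cls y (m - i)) - x i * y (m - i)) \<in> T (Suc m)"
      by (rule T_sum') 
    then show "(\<Sum>i\<le>m. rep (cls x i) * rep (cls y (m - i))) - (\<Sum>i\<le>m. x i * y (m - i)) \<in> T (Suc m)"
      by (simp add: sum_subtractf)
  qed
  finally show ?thesis .
qed

lemma gseq_conv: "gseq x \<Longrightarrow> gseq y \<Longrightarrow> gseq (\<lambda>m. \<Sum>i\<le>m. x i * y (m - i))"
proof -
  assume x: "gseq x" and y: "gseq y"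
  have "(\<Sum>i\<le>m. x i * y (m - i)) \<in> T m" for m
  proof (rule T_sum')
    fix i assume "i \<in> {..m}"
    then have "x i * y (m - i) \<in> T (i + (m - i))" using x y unfolding gseq_def by (blast intro: T_mult)
    then show "x i * y (m - i) \<in> T m" using \<open>i \<in> {..m}\<close> by simp
  qed
  then show ?thesis unfolding gseq_def by blast
qed

lemma inv_cls:
  assumes y: "gseq y"
  shows "\<ominus>\<^bsub>R\<^esub> cls y = cls (\<lambda>i. - y i)"
proof -
  have "\<ominus>\<^bsub>R\<^esub> cls y = (THE z. z \<in> carrier R \<and> cls y \<oplus>\<^bsub>R\<^esub> z = \<zero>\<^bsub>R\<^esub> \<and> z \<oplus>\<^bsub>R\<^esub> cls y = \<zero>\<^bsub>R\<^esub>)"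
    unfolding a_inv_def m_inv_def by simp
  also have "\<dots> = cls (\<lambda>i. - y i)"
  proof (rule the_equality)
    show "cls (\<lambda>i. - y i) \<in> carrier R \<and> cls y \<oplus>\<^bsub>R\<^esub> cls (\<lambda>i. - y i) = \<zero>\<^bsub>R\<^esub> \<and>
        cls (\<lambda>i. - y i) \<oplus>\<^bsub>R\<^esub> cls y = \<zero>\<^bsub>R\<^esub>"
      using cls_carrier[OF gseq_uminus[OF y]] by (simp add: add_cls zero_R)
  next
    fix z assume z: "z \<in> carrier R \<and> cls y \<oplus>\<^bsub>R\<^esub> z = \<zero>\<^bsub>R\<^esub> \<and> z \<oplus>\<^bsub>R\<^esub> cls y = \<zero>\<^bsub>R\<^esub>"
    then have zc: "z = cls (\<lambda>i. rep (z i))" using carrier_cls by blast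
    then have "cls (\<lambda>i. y i + rep (z i)) = cls (\<lambda>_. 0)" using z by (metis add_cls zero_R)
    then have "\<forall>i. y i + rep (z i) \<in> T (Suc i)" unfolding cls_eq by simp
    then have "cls (\<lambda>i. rep (z i)) = cls (\<lambda>i. - y i)" unfolding cls_eq by (simp add: add.commute)
    then show "z = cls (\<lambda>i. - y i)" using zc by simp
  qed
  finally show ?thesis .
qed

lemma minus_cls: "gseq y \<Longrightarrow> cls x \<ominus>\<^bsub>R\<^esub> cls y = cls (\<lambda>i. x i - y i)"
  unfolding a_minus_def by (simp add: inv_cls add_cls)

definition sig :: "nat \<Rightarrow> 'b \<Rightarrow> nat \<Rightarrow> 'b set" where
  "sig k b = cls (\<lambda>i. if i = k then b else 0)"

lemma gseq_sig: "b \<in> T k \<Longrightarrow> gseq (\<lambda>i. if i = k then b else 0)"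
  unfolding gseq_def by simp

lemma sig_carrier: "b \<in> T k \<Longrightarrow> sig k b \<in> carrier R"
  unfolding sig_def by (rule cls_carrier[OF gseq_sig])

lemma gr_scalar_sig: "gr_scalar \<iota> t c = sig 0 (\<iota> c)"
  unfolding gr_scalar_def sig_def cls_def by simp

lemma gr_t_sig: "gr_t t = sig 1 t"
  unfolding gr_t_def sig_def cls_def by simp

lemma t_T1: "t \<in> T 1"
  using T_I[of 1 1] by simp

lemma sig0_mult: "gseq x \<Longrightarrow> sig 0 a \<otimes>\<^bsub>R\<^esub> cls x = cls (\<lambda>m. a * x m)"
proof -
  assume x: "gseq x"
  have "sig 0 a \<otimes>\<^bsub>R\<^esub> cls x = cls (\<lambda>m. \<Sum>i\<le>m. (if i = 0 then a else 0) * x (m - i))"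
    unfolding sig_def by (rule mult_cls[OF gseq_sig[OF T0] x])
  also have "\<dots> = cls (\<lambda>m. a * x m)"
  proof -
    have "(\<Sum>i\<le>m. (if i = 0 then a else 0) * x (m - i)) = a * x m" for m
    proof -
      have "(\<Sum>i\<le>m. (if i = 0 then a else 0) * x (m - i)) = (\<Sum>i\<le>m. if i = 0 then a * x (m - i) else 0)"
        by (rule sum.cong) auto
      also have "\<dots> = a * x m" by (simp add: sum.delta)
      finally show ?thesis .
    qed
    then show ?thesis by simp
  qed
  finally show ?thesis .
qed

lemma sig1_mult: "gseq x \<Longrightarrow> sig 1 t \<otimes>\<^bsub>R\<^esub> cls x = cls (\<lambda>m. if m = 0 then 0 else t * x (m - 1))"
proof -
  assume x: "gseq x"
  have "sig 1 t \<otimes>\<^bsub>R\<^esub> cls x = cls (\<lambda>m. \<Sum>i\<le>m. (if i = 1 then t else 0) * x (m - i))"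
    unfolding sig_def by (rule mult_cls[OF gseq_sig[OF t_T1] x])
  also have "\<dots> = cls (\<lambda>m. if m = 0 then 0 else t * x (m - 1))"
  proof -
    have "(\<Sum>i\<le>m. (if i = 1 then t else 0) * x (m - i)) = (if m = 0 then 0 else t * x (m - 1))" for m
    proof -
      have "(\<Sum>i\<le>m. (if i = 1 then t else 0) * x (m - i)) = (\<Sum>i\<le>m. if i = 1 then t * x (m - i) else 0)"
        by (rule sum.cong) auto
      also have "\<dots> = (if m = 0 then 0 else t * x (m - 1))" by (simp add: sum.delta)
      finally show ?thesis .
    qed
    then show ?thesis by simp
  qed
  finally show ?thesis .
qed

lemma sig0_sig0: "sig 0 a \<otimes>\<^bsub>R\<^esub> sig 0 b = sig 0 (a * b)"
proof -
  have "sig 0 a \<otimes>\<^bsub>R\<^esub> sig 0 b = cls (\<lambda>m. a * (if m = 0 then b else 0))"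
    unfolding sig_def[of 0 b] by (rule sig0_mult[OF gseq_sig[OF T0]])
  also have "\<dots> = sig 0 (a * b)" unfolding sig_def by (rule arg_cong[of _ _ cls]) auto
  finally show ?thesis .
qed

end



lemma tri_sum:
  fixes G :: "nat \<Rightarrow> nat \<Rightarrow> 'a::comm_monoid_add"
  shows "(\<Sum>j\<le>m. \<Sum>i\<le>m - j. G j i) = (\<Sum>q\<le>m. \<Sum>j\<le>q. G j (q - j))"
proof -
  have "(\<Sum>j\<le>m. \<Sum>i\<le>m - j. G j i) = (\<Sum>(j, i)\<in>Sigma {..m} (\<lambda>j. {..m - j}). G j i)"
    by (rule sum.Sigma) auto
  also have "Sigma {..m} (\<lambda>j. {..m - j}) = {(j, i). j + i \<le> m}" by auto
  also have "(\<Sum>(j, i)\<in>{(j, i). j + i \<le> m}. G j i) = (\<Sum>q\<le>m. \<Sum>j\<le>q. G j (q - j))"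
    by (rule sum.triangle_reindex_eq)
  finally show ?thesis .
qed

lemma sum_reflect:
  fixes H :: "nat \<Rightarrow> nat \<Rightarrow> 'a::comm_monoid_add"
  shows "(\<Sum>i\<le>q. H i (q - i)) = (\<Sum>j\<le>q. H (q - j) j)"
  by (rule sum.reindex_bij_witness[where i="\<lambda>j. q - j" and j="\<lambda>i. q - i"]) auto

context Bctx
begin

definition efam :: "(nat \<Rightarrow> 'b \<Rightarrow> 'b) \<Rightarrow> bool" where
  "efam E \<longleftrightarrow> (\<forall>i. endo (E i) \<and> (\<forall>y. E i y \<in> T i))"

definition fam :: "nat \<Rightarrow> (nat \<Rightarrow> 'b \<Rightarrow> 'b) \<Rightarrow> bool" where
  "fam m E \<longleftrightarrow> efam E \<and> (\<forall>i. E i \<in> Dm m)"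

definition Op :: "(nat \<Rightarrow> 'b \<Rightarrow> 'b) \<Rightarrow> (nat \<Rightarrow> 'b set) \<Rightarrow> (nat \<Rightarrow> 'b set)" where
  "Op E = (\<lambda>g\<in>carrier R. cls (\<lambda>m. \<Sum>i\<le>m. E i (rep (g (m - i)))))"

definition esum :: "(nat \<Rightarrow> 'b \<Rightarrow> 'b) \<Rightarrow> (nat \<Rightarrow> 'b) \<Rightarrow> nat \<Rightarrow> 'b" where
  "esum E x = (\<lambda>m. \<Sum>i\<le>m. E i (x (m - i)))"

lemma gamma_Op: "gamma t G = Op (\<lambda>i. rep (G i))"
  unfolding gamma_def Op_def cls_def by simp

lemma efam_endo: "efam E \<Longrightarrow> endo (E i)"
  unfolding efam_def by auto

lemma efam_range: "efam E \<Longrightarrow> E i y \<in> T i"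
  unfolding efam_def by auto

lemma efam_T: "efam E \<Longrightarrow> x \<in> T p \<Longrightarrow> E i x \<in> T (p + i)"
  by (rule endo_T[OF efam_endo efam_range])

lemma gseq_esum: "efam E \<Longrightarrow> gseq x \<Longrightarrow> gseq (esum E x)"
proof -
  assume E: "efam E" and x: "gseq x"
  have "(\<Sum>i\<le>m. E i (x (m - i))) \<in> T m" for m
  proof (rule T_sum')
    fix i assume i: "i \<in> {..m}"
    have "E i (x (m - i)) \<in> T (m - i + i)" using x unfolding gseq_def by (blast intro: efam_T[OF E])
    then show "E i (x (m - i)) \<in> T m" using i by simp
  qed
  then show ?thesis unfolding gseq_def esum_def by blast
qed

lemma Op_cls: "efam E \<Longrightarrow> gseq x \<Longrightarrow> Op E (cls x) = cls (esum E x)"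
proof -
  assume E: "efam E" and x: "gseq x"
  have "Op E (cls x) = cls (\<lambda>m. \<Sum>i\<le>m. E i (rep (cls x (m - i))))"
    unfolding Op_def using cls_carrier[OF x] by simp
  also have "\<dots> = cls (esum E x)"
  proof (rule cls_eqI)
    fix m
    have "E i (rep (cls x (m - i))) - E i (x (m - i)) \<in> T (Suc m)" if i: "i \<in> {..m}" for i
    proof -
      have "E i (rep (cls x (m - i))) - E i (x (m - i)) = E i (rep (cls x (m - i)) - x (m - i))"
        using endo_diff[OF efam_endo[OF E]] by simp
      also have "\<dots> \<in> T (Suc (m - i) + i)" by (rule efam_T[OF E rep_cls])
      finally show ?thesis using i by simp
    qed
    then have "(\<Sum>i\<le>m. E i (rep (cls x (m - i))) - E i (x (m - i))) \<in> T (Suc m)" by (rule T_sum')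
    then show "(\<Sum>i\<le>m. E i (rep (cls x (m - i)))) - esum E x m \<in> T (Suc m)"
      unfolding esum_def by (simp add: sum_subtractf)
  qed
  finally show ?thesis .
qed

lemma Op_carrier: "efam E \<Longrightarrow> g \<in> carrier R \<Longrightarrow> Op E g \<in> carrier R"
proof -
  assume E: "efam E" and g: "g \<in> carrier R"
  then obtain x where x: "gseq x" "g = cls x" using carrier_obtain by blast
  show ?thesis unfolding x(2) Op_cls[OF E x(1)] by (rule cls_carrier[OF gseq_esum[OF E x(1)]])
qed

lemma esum_add: "efam E \<Longrightarrow> esum E (\<lambda>i. x i + y i) = (\<lambda>m. esum E x m + esum E y m)"
  unfolding esum_def by (simp add: endo_add[OF efam_endo] sum.distrib)

lemma esum_iota: "efam E \<Longrightarrow> esum E (\<lambda>m. \<iota> c * x m) = (\<lambda>m. \<iota> c * esum E x m)"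
  unfolding esum_def by (simp add: endo_iota[OF efam_endo] sum_distrib_left)

lemma esum_t: "efam E \<Longrightarrow> esum E (\<lambda>m. if m = 0 then 0 else t * x (m - 1))
    = (\<lambda>m. if m = 0 then 0 else t * esum E x (m - 1))"
proof
  fix m assume E: "efam E"
  show "esum E (\<lambda>m. if m = 0 then 0 else t * x (m - 1)) m = (if m = 0 then 0 else t * esum E x (m - 1))"
  proof (cases m)
    case 0 then show ?thesis unfolding esum_def by (simp add: endo_0[OF efam_endo[OF E]])
  next
    case (Suc k)
    have "esum E (\<lambda>m. if m = 0 then 0 else t * x (m - 1)) m
        = (\<Sum>i\<le>k. E i (if Suc k - i = 0 then 0 else t * x (Suc k - i - 1))) + E (Suc k) 0"
      unfolding esum_def Suc by (simp add: sum.atMost_Suc)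
    also have "\<dots> = (\<Sum>i\<le>k. t * E i (x (k - i)))"
      by (simp add: endo_0[OF efam_endo[OF E]] endo_t[OF efam_endo[OF E]] Suc_diff_le)
    also have "\<dots> = t * esum E x k" unfolding esum_def by (simp add: sum_distrib_left)
    finally show ?thesis using Suc by simp
  qed
qed

lemma gseq_tshift: "gseq x \<Longrightarrow> gseq (\<lambda>m. if m = 0 then 0 else t * x (m - 1))"
proof -
  assume x: "gseq x"
  have "(if m = 0 then 0 else t * x (m - 1)) \<in> T m" for m
  proof (cases m)
    case (Suc k)
    then show ?thesis using T_t[of "x k" k] x unfolding gseq_def by simp
  qed simp
  then show ?thesis unfolding gseq_def by blast
qed

lemma gseq_iota: "gseq x \<Longrightarrow> gseq (\<lambda>m. \<iota> c * x m)"
  unfolding gseq_def by (auto intro: T_mult_left)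

lemma Op_End: "efam E \<Longrightarrow> Op E \<in> End_kn R (gr_scalar \<iota> t) (gr_t t)"
proof -
  assume E: "efam E"
  have 1: "Op E \<in> carrier R \<rightarrow> carrier R" using Op_carrier[OF E] by blast
  have 2: "Op E \<in> extensional (carrier R)" unfolding Op_def by (rule restrict_extensional)
  have 3: "Op E (g \<oplus>\<^bsub>R\<^esub> h) = Op E g \<oplus>\<^bsub>R\<^esub> Op E h" if gh: "g \<in> carrier R" "h \<in> carrier R" for g h
  proof -
    obtain x where x: "gseq x" "g = cls x" using gh(1) carrier_obtain by blast
    obtain y where y: "gseq y" "h = cls y" using gh(2) carrier_obtain by blast
    note xy = x y
    have "Op E (g \<oplus>\<^bsub>R\<^esub> h) = Op E (cls (\<lambda>i. x i + y i))" unfolding xy add_cls ..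
    also have "\<dots> = cls (esum E (\<lambda>i. x i + y i))" by (rule Op_cls[OF E gseq_add[OF xy(1) xy(3)]])
    also have "\<dots> = cls (\<lambda>m. esum E x m + esum E y m)" by (simp only: esum_add[OF E])
    also have "\<dots> = cls (esum E x) \<oplus>\<^bsub>R\<^esub> cls (esum E y)" by (simp only: add_cls)
    also have "\<dots> = Op E g \<oplus>\<^bsub>R\<^esub> Op E h" by (simp only: xy Op_cls[OF E xy(1)] Op_cls[OF E xy(3)])
    finally show ?thesis .
  qed
  have 4: "Op E (gr_scalar \<iota> t c \<otimes>\<^bsub>R\<^esub> g) = gr_scalar \<iota> t c \<otimes>\<^bsub>R\<^esub> Op E g" if gh: "g \<in> carrier R" for c g
  proof -
    obtain x where x: "gseq x" "g = cls x" using gh carrier_obtain by blast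
    have "Op E (gr_scalar \<iota> t c \<otimes>\<^bsub>R\<^esub> g) = Op E (cls (\<lambda>m. \<iota> c * x m))"
      unfolding x gr_scalar_sig sig0_mult[OF x(1)] ..
    also have "\<dots> = cls (esum E (\<lambda>m. \<iota> c * x m))" by (rule Op_cls[OF E gseq_iota[OF x(1)]])
    also have "\<dots> = cls (\<lambda>m. \<iota> c * esum E x m)" by (simp only: esum_iota[OF E])
    also have "\<dots> = sig 0 (\<iota> c) \<otimes>\<^bsub>R\<^esub> cls (esum E x)" by (simp only: sig0_mult[OF gseq_esum[OF E x(1)]])
    also have "\<dots> = gr_scalar \<iota> t c \<otimes>\<^bsub>R\<^esub> Op E g" by (simp only: x Op_cls[OF E x(1)] gr_scalar_sig)
    finally show ?thesis .
  qed
  have 5: "Op E (gr_t t \<otimes>\<^bsub>R\<^esub> g) = gr_t t \<otimes>\<^bsub>R\<^esub> Op E g" if gh: "g \<in> carrier R" for g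
  proof -
    obtain x where x: "gseq x" "g = cls x" using gh carrier_obtain by blast
    have "Op E (gr_t t \<otimes>\<^bsub>R\<^esub> g) = Op E (cls (\<lambda>m. if m = 0 then 0 else t * x (m - 1)))"
      unfolding x gr_t_sig sig1_mult[OF x(1)] ..
    also have "\<dots> = cls (esum E (\<lambda>m. if m = 0 then 0 else t * x (m - 1)))" by (rule Op_cls[OF E gseq_tshift[OF x(1)]])
    also have "\<dots> = cls (\<lambda>m. if m = 0 then 0 else t * esum E x (m - 1))" by (simp only: esum_t[OF E])
    also have "\<dots> = sig 1 t \<otimes>\<^bsub>R\<^esub> cls (esum E x)" by (simp only: sig1_mult[OF gseq_esum[OF E x(1)]])
    also have "\<dots> = gr_t t \<otimes>\<^bsub>R\<^esub> Op E g" by (simp only: x Op_cls[OF E x(1)] gr_t_sig)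
    finally show ?thesis .
  qed
  show ?thesis unfolding End_kn_def mem_Collect_eq
    using 1 2 3 4 5 by (intro conjI ballI allI) auto
qed

definition ecomm :: "(nat \<Rightarrow> 'b) \<Rightarrow> (nat \<Rightarrow> 'b \<Rightarrow> 'b) \<Rightarrow> nat \<Rightarrow> 'b \<Rightarrow> 'b" where
  "ecomm a E = (\<lambda>q y. \<Sum>j\<le>q. lc (a j) (E (q - j)) y)"

lemma endo_sumf: "finite S \<Longrightarrow> (\<And>j. j \<in> S \<Longrightarrow> endo (f j)) \<Longrightarrow> endo (\<lambda>y. \<Sum>j\<in>S. f j y)"
proof (induction S rule: finite_induct)
  case empty then show ?case using endo_zero_fun by (simp add: zero_fun_def)
next
  case (insert a S)
  have "(\<lambda>y. \<Sum>j\<in>insert a S. f j y) = f a + (\<lambda>y. \<Sum>j\<in>S. f j y)"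
    using insert by (simp add: fun_eq_iff)
  then show ?case using insert by (simp add: endo_plus)
qed

lemma efam_ecomm: "efam E \<Longrightarrow> gseq a \<Longrightarrow> efam (ecomm a E)"
proof -
  assume E: "efam E" and a: "gseq a"
  have "endo (ecomm a E q)" for q
    unfolding ecomm_def by (rule endo_sumf) (auto intro: endo_lc efam_endo[OF E])
  moreover have "ecomm a E q y \<in> T q" for q y
    unfolding ecomm_def
  proof (rule T_sum')
    fix j assume j: "j \<in> {..q}"
    have aj: "a j \<in> T j" using a unfolding gseq_def by blast
    have "a j * E (q - j) y \<in> T (j + (q - j))" by (rule T_mult[OF aj efam_range[OF E]])
    moreover have "E (q - j) (a j * y) \<in> T (j + (q - j))" by (rule efam_T[OF E T_mult_right[OF aj]])
    ultimately have "a j * E (q - j) y - E (q - j) (a j * y) \<in> T (j + (q - j))" by (rule T_diff)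
    then show "lc (a j) (E (q - j)) y \<in> T q" unfolding lc_def using j by simp
  qed
  ultimately show ?thesis unfolding efam_def by blast
qed

lemma fam_ecomm: "fam (Suc m) E \<Longrightarrow> gseq a \<Longrightarrow> fam m (ecomm a E)"
  unfolding fam_def using efam_ecomm
  by (auto simp: ecomm_def intro!: Dm_sum Dm_lc)

lemma fam0_ecomm: "fam 0 E \<Longrightarrow> ecomm a E = (\<lambda>q y. 0)"
  unfolding fam_def ecomm_def by (simp add: Dm_lc0 zero_fun_def)

lemma Op_zero: "Op (\<lambda>q y. 0) = (\<lambda>g\<in>carrier R. \<zero>\<^bsub>R\<^esub>)"
  unfolding Op_def zero_R by simp

lemma comm_identity:
  assumes E: "efam E"
  shows "(\<Sum>j\<le>m. a j * esum E x (m - j)) - esum E (\<lambda>p. \<Sum>j\<le>p. a j * x (p - j)) m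
       = esum (ecomm a E) x m"
proof -
  have A: "(\<Sum>j\<le>m. a j * esum E x (m - j)) = (\<Sum>q\<le>m. \<Sum>j\<le>q. a j * E (q - j) (x (m - q)))"
  proof -
    have "(\<Sum>j\<le>m. a j * esum E x (m - j)) = (\<Sum>j\<le>m. \<Sum>i\<le>m - j. a j * E i (x (m - j - i)))"
      unfolding esum_def by (simp add: sum_distrib_left)
    also have "\<dots> = (\<Sum>q\<le>m. \<Sum>j\<le>q. a j * E (q - j) (x (m - j - (q - j))))"
      by (rule tri_sum)
    also have "\<dots> = (\<Sum>q\<le>m. \<Sum>j\<le>q. a j * E (q - j) (x (m - q)))"
      by (intro sum.cong refl) (simp add: diff_diff_left)
    finally show ?thesis .
  qed
  have B: "esum E (\<lambda>p. \<Sum>j\<le>p. a j * x (p - j)) m = (\<Sum>q\<le>m. \<Sum>j\<le>q. E (q - j) (a j * x (m - q)))"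
  proof -
    have "esum E (\<lambda>p. \<Sum>j\<le>p. a j * x (p - j)) m = (\<Sum>i\<le>m. \<Sum>j\<le>m - i. E i (a j * x (m - i - j)))"
      unfolding esum_def by (simp add: endo_sum[OF efam_endo[OF E]])
    also have "\<dots> = (\<Sum>q\<le>m. \<Sum>i\<le>q. E i (a (q - i) * x (m - i - (q - i))))"
      by (rule tri_sum)
    also have "\<dots> = (\<Sum>q\<le>m. \<Sum>j\<le>q. E (q - j) (a j * x (m - (q - j) - j)))"
      by (rule sum.cong[OF refl]) (rule sum_reflect[where H="\<lambda>i j. E i (a j * x (m - i - j))"])
    also have "\<dots> = (\<Sum>q\<le>m. \<Sum>j\<le>q. E (q - j) (a j * x (m - q)))"
      by (intro sum.cong refl) (simp add: diff_diff_left)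
    finally show ?thesis .
  qed
  have C: "esum (ecomm a E) x m = (\<Sum>q\<le>m. \<Sum>j\<le>q. a j * E (q - j) (x (m - q)) - E (q - j) (a j * x (m - q)))"
    unfolding esum_def ecomm_def lc_def by simp
  show ?thesis unfolding A B C by (simp add: sum_subtractf)
qed

lemma Op_lie: "efam E \<Longrightarrow> gseq a \<Longrightarrow> lie_comm R (cls a) (Op E) = Op (ecomm a E)"
proof -
  assume E: "efam E" and a: "gseq a"
  have E': "efam (ecomm a E)" by (rule efam_ecomm[OF E a])
  show ?thesis
  proof (rule ext)
    fix g
    show "lie_comm R (cls a) (Op E) g = Op (ecomm a E) g"
    proof (cases "g \<in> carrier R")
      case False then show ?thesis unfolding lie_comm_def Op_def by simp
    next
      case True
      then obtain x where x: "gseq x" "g = cls x" using carrier_obtain by blast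
      have "lie_comm R (cls a) (Op E) g
          = (cls a \<otimes>\<^bsub>R\<^esub> Op E (cls x)) \<ominus>\<^bsub>R\<^esub> Op E (cls a \<otimes>\<^bsub>R\<^esub> cls x)"
        unfolding lie_comm_def using True x by simp
      also have "\<dots> = cls (\<lambda>m. (\<Sum>j\<le>m. a j * esum E x (m - j)) - esum E (\<lambda>p. \<Sum>j\<le>p. a j * x (p - j)) m)"
        by (simp add: Op_cls[OF E] x mult_cls a gseq_esum[OF E] gseq_conv minus_cls)
      also have "\<dots> = cls (esum (ecomm a E) x)"
        by (simp add: comm_identity[OF E])
      also have "\<dots> = Op (ecomm a E) g" using Op_cls[OF E' x(1)] x(2) by simp
      finally show ?thesis .
    qed
  qed
qed

lemma iter_Op:
  "set fs \<subseteq> carrier R \<Longrightarrow> fam (k + length fs) E \<Longrightarrow> \<exists>E'. fam k E' \<and> iter_comm R fs (Op E) = Op E'"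
proof (induction fs arbitrary: k)
  case Nil then show ?case unfolding iter_comm_def by auto
next
  case (Cons f fs)
  have "fam (Suc k + length fs) E" using Cons.prems by simp
  then obtain E'' where E'': "fam (Suc k) E''" "iter_comm R fs (Op E) = Op E''"
    using Cons.IH[of "Suc k"] Cons.prems by auto
  obtain a where a: "gseq a" "f = cls a" using Cons.prems carrier_obtain by auto
  have "iter_comm R (f # fs) (Op E) = lie_comm R f (iter_comm R fs (Op E))"
    unfolding iter_comm_def by simp
  also have "\<dots> = Op (ecomm a E'')" using E'' a Op_lie fam_def by simp
  finally show ?case using fam_ecomm[OF E''(1) a(1)] by blast
qed

lemma Op_order: "fam m E \<Longrightarrow> Op E \<in> diff_ops_order R (gr_scalar \<iota> t) (gr_t t) m"
proof -
  assume E: "fam m E"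
  have "iter_comm R fs (Op E) = (\<lambda>x\<in>carrier R. \<zero>\<^bsub>R\<^esub>)"
    if fs: "set fs \<subseteq> carrier R" "length fs = Suc m" for fs
  proof -
    obtain f fs' where ff: "fs = f # fs'" "length fs' = m" using fs(2) by (cases fs) auto
    obtain E' where E': "fam 0 E'" "iter_comm R fs' (Op E) = Op E'"
      using iter_Op[of fs' 0 E] fs(1) ff E by auto
    obtain a where a: "gseq a" "f = cls a" using fs(1) ff carrier_obtain by auto
    have "iter_comm R fs (Op E) = lie_comm R f (iter_comm R fs' (Op E))"
      unfolding iter_comm_def ff by simp
    also have "\<dots> = Op (ecomm a E')" using E' a Op_lie fam_def by simp
    also have "\<dots> = (\<lambda>x\<in>carrier R. \<zero>\<^bsub>R\<^esub>)" using fam0_ecomm[OF E'(1)] Op_zero by simp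
    finally show ?thesis .
  qed
  then show ?thesis unfolding diff_ops_order_def using Op_End E fam_def by blast
qed

lemma Op_diff_ops: "fam m E \<Longrightarrow> Op E \<in> diff_ops R (gr_scalar \<iota> t) (gr_t t)"
  unfolding diff_ops_def using Op_order by blast

end



context Bctx
begin

abbreviation F where "F i \<equiv> filt_D \<iota> t i"

lemma F_iff: "X \<in> F i \<longleftrightarrow> (\<exists>d\<in>DB. X = (\<lambda>x. t ^ i * d x))"
  unfolding filt_D_def diff_ops_type by auto

lemma F_0: "(0 :: 'b \<Rightarrow> 'b) \<in> F i"
  unfolding F_iff using DB_zero by (auto intro!: bexI[of _ 0] simp: fun_eq_iff)

lemma F_add: "X \<in> F i \<Longrightarrow> Y \<in> F i \<Longrightarrow> X + Y \<in> F i"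
proof -
  assume "X \<in> F i" "Y \<in> F i"
  then obtain d e where de: "d \<in> DB" "X = (\<lambda>x. t ^ i * d x)" "e \<in> DB" "Y = (\<lambda>x. t ^ i * e x)"
    unfolding F_iff by blast
  have "X + Y = (\<lambda>x. t ^ i * (d + e) x)" unfolding de by (simp add: fun_eq_iff distrib_left)
  then show ?thesis unfolding F_iff using DB_plus[OF de(1) de(3)] by (intro bexI[of _ "d + e"]) simp_all
qed

lemma F_uminus: "X \<in> F i \<Longrightarrow> - X \<in> F i"
proof -
  assume "X \<in> F i"
  then obtain d where de: "d \<in> DB" "X = (\<lambda>x. t ^ i * d x)" unfolding F_iff by blast
  have "- X = (\<lambda>x. t ^ i * (- d) x)" unfolding de by (simp add: fun_eq_iff)
  then show ?thesis unfolding F_iff using DB_uminus[OF de(1)] by (intro bexI[of _ "- d"]) simp_all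
qed

lemma F_diff: "X \<in> F i \<Longrightarrow> Y \<in> F i \<Longrightarrow> X - Y \<in> F i"
  using F_add[of X i "- Y"] F_uminus[of Y i] by simp

lemma F_Suc: "X \<in> F (Suc i) \<Longrightarrow> X \<in> F i"
proof -
  assume "X \<in> F (Suc i)"
  then obtain d where de: "d \<in> DB" "X = (\<lambda>x. t ^ Suc i * d x)" unfolding F_iff by blast
  have "X = (\<lambda>x. t ^ i * (\<lambda>x. t ^ 1 * d x) x)" unfolding de
    by (simp add: fun_eq_iff t_tpow mult.assoc)
  then show ?thesis unfolding F_iff using DB_tmul[OF de(1), of 1] by (intro bexI[of _ "\<lambda>x. t ^ 1 * d x"]) simp_all
qed

lemma F_T: "X \<in> F i \<Longrightarrow> X x \<in> T i"
  unfolding F_iff using T_I by auto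

lemma F_coset_eq: "((+) X ` F i = (+) Y ` F i) \<longleftrightarrow> X - Y \<in> F i"
  by (rule coset_eq_iff) (auto intro: F_0 F_add F_uminus)

lemma F_rep: "rep ((+) X ` F i) - X \<in> F i"
  by (rule rep_coset) (rule F_0)

lemma gD_iff: "G \<in> gr_D \<iota> t \<longleftrightarrow> (\<forall>i. \<exists>X\<in>F i. G i = (+) X ` F (Suc i))"
  unfolding gr_D_def gr_pieces_def by simp

lemma gD_rep:
  assumes "G \<in> gr_D \<iota> t"
  shows "rep (G i) \<in> F i" "G i = (+) (rep (G i)) ` F (Suc i)"
proof -
  obtain X where X: "X \<in> F i" "G i = (+) X ` F (Suc i)" using assms unfolding gD_iff by blast
  have r: "rep (G i) - X \<in> F (Suc i)" unfolding X(2) by (rule F_rep)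
  have "(rep (G i) - X) + X \<in> F i" using F_add[OF F_Suc[OF r] X(1)] .
  then show "rep (G i) \<in> F i" by simp
  have "(+) (rep (G i)) ` F (Suc i) = (+) X ` F (Suc i)" using r by (simp only: F_coset_eq)
  then show "G i = (+) (rep (G i)) ` F (Suc i)" using X(2) by simp
qed

lemma gD_repD: "G \<in> gr_D \<iota> t \<Longrightarrow> \<exists>d\<in>DB. rep (G i) = (\<lambda>x. t ^ i * d x)"
  using gD_rep(1) F_iff by blast

lemma gD_fam: "G \<in> gr_D \<iota> t \<Longrightarrow> \<exists>M. fam M (\<lambda>i. rep (G i))"
proof -
  assume G: "G \<in> gr_D \<iota> t"
  have "\<forall>i. \<exists>d. d \<in> DB \<and> rep (G i) = (\<lambda>x. t ^ i * d x)" using gD_repD[OF G] by blast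
  then obtain dd where dd: "\<And>i. dd i \<in> DB" "\<And>i. rep (G i) = (\<lambda>x. t ^ i * dd i x)"
    using choice[of "\<lambda>i d. d \<in> DB \<and> rep (G i) = (\<lambda>x. t ^ i * d x)"] by blast
  obtain M where M: "\<forall>i\<le>n. dd i \<in> Dm M" using finite_max_order[of n dd] dd(1) by blast
  have "rep (G i) \<in> Dm M" for i
  proof (cases "i \<le> n")
    case True then show ?thesis unfolding dd(2) using Dm_tmul M by blast
  next
    case False
    then have "rep (G i) = 0" unfolding dd(2) using t_big[of i] by (simp add: fun_eq_iff)
    then show ?thesis using Dm_zero by simp
  qed
  moreover have "endo (rep (G i))" for i using calculation Dm_endo by blast
  moreover have "rep (G i) y \<in> T i" for i y unfolding dd(2) by (rule T_I)
  ultimately show ?thesis unfolding fam_def efam_def by blast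
qed

theorem part_i: "G \<in> gr_D \<iota> t \<Longrightarrow> gamma t G \<in> diff_ops R (gr_scalar \<iota> t) (gr_t t)"
proof -
  assume "G \<in> gr_D \<iota> t"
  then obtain M where "fam M (\<lambda>i. rep (G i))" using gD_fam by blast
  then show ?thesis unfolding gamma_Op by (rule Op_diff_ops)
qed

lemma Op_sig0: "efam E \<Longrightarrow> Op E (sig 0 b) = cls (\<lambda>m. E m b)"
proof -
  assume E: "efam E"
  have "Op E (sig 0 b) = cls (esum E (\<lambda>i. if i = 0 then b else 0))"
    unfolding sig_def by (rule Op_cls[OF E gseq_sig[OF T0]])
  also have "esum E (\<lambda>i. if i = 0 then b else 0) = (\<lambda>m. E m b)"
  proof
    fix m
    have "esum E (\<lambda>i. if i = 0 then b else 0) m = (\<Sum>i\<le>m. if i = m then E i b else 0)"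
      unfolding esum_def by (rule sum.cong) (auto simp: endo_0[OF efam_endo[OF E]])
    also have "\<dots> = E m b" by simp
    finally show "esum E (\<lambda>i. if i = 0 then b else 0) m = E m b" .
  qed
  finally show ?thesis .
qed

lemma gamma_sig0: "G \<in> gr_D \<iota> t \<Longrightarrow> gamma t G (sig 0 b) = cls (\<lambda>m. rep (G m) b)"
proof -
  assume "G \<in> gr_D \<iota> t"
  then obtain M where "fam M (\<lambda>i. rep (G i))" using gD_fam by blast
  then have "efam (\<lambda>i. rep (G i))" unfolding fam_def by blast
  then show ?thesis unfolding gamma_Op by (rule Op_sig0)
qed

lemma End_carrier: "\<Phi> \<in> End_kn R s tt \<Longrightarrow> g \<in> carrier R \<Longrightarrow> \<Phi> g \<in> carrier R"
  unfolding End_kn_def by auto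

lemma End_add: "\<Phi> \<in> End_kn R s tt \<Longrightarrow> g \<in> carrier R \<Longrightarrow> h \<in> carrier R \<Longrightarrow> \<Phi> (g \<oplus>\<^bsub>R\<^esub> h) = \<Phi> g \<oplus>\<^bsub>R\<^esub> \<Phi> h"
  unfolding End_kn_def by auto

lemma End_scal: "\<Phi> \<in> End_kn R s tt \<Longrightarrow> g \<in> carrier R \<Longrightarrow> \<Phi> (s c \<otimes>\<^bsub>R\<^esub> g) = s c \<otimes>\<^bsub>R\<^esub> \<Phi> g"
  unfolding End_kn_def by auto

lemma End_tt: "\<Phi> \<in> End_kn R s tt \<Longrightarrow> g \<in> carrier R \<Longrightarrow> \<Phi> (tt \<otimes>\<^bsub>R\<^esub> g) = tt \<otimes>\<^bsub>R\<^esub> \<Phi> g"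
  unfolding End_kn_def by auto

lemma End_ext: "\<Phi> \<in> End_kn R s tt \<Longrightarrow> \<Phi> \<in> extensional (carrier R)"
  unfolding End_kn_def by auto

lemma zero_carrier: "\<zero>\<^bsub>R\<^esub> \<in> carrier R"
  unfolding zero_R by (rule cls_carrier[OF gseq_zero])

lemma End_zero:
  assumes P: "\<Phi> \<in> End_kn R s tt"
  shows "\<Phi> \<zero>\<^bsub>R\<^esub> = \<zero>\<^bsub>R\<^esub>"
proof -
  have zz: "\<zero>\<^bsub>R\<^esub> \<oplus>\<^bsub>R\<^esub> \<zero>\<^bsub>R\<^esub> = \<zero>\<^bsub>R\<^esub>" unfolding zero_R add_cls by simp
  obtain z where z: "gseq z" "\<Phi> \<zero>\<^bsub>R\<^esub> = cls z"
    using carrier_obtain End_carrier[OF P zero_carrier] by blast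
  have "\<Phi> \<zero>\<^bsub>R\<^esub> = \<Phi> \<zero>\<^bsub>R\<^esub> \<oplus>\<^bsub>R\<^esub> \<Phi> \<zero>\<^bsub>R\<^esub>"
    using End_add[OF P zero_carrier zero_carrier] zz by simp
  then have "cls z = cls (\<lambda>i. z i + z i)" unfolding z add_cls .
  then have "\<forall>i. z i - (z i + z i) \<in> T (Suc i)" unfolding cls_eq .
  then have "\<forall>i. z i - 0 \<in> T (Suc i)" using T_uminus by fastforce
  then have "cls z = cls (\<lambda>_. 0)" unfolding cls_eq by simp
  then show ?thesis using z(2) zero_R by simp
qed

lemma sig_t_step: "sig 1 t \<otimes>\<^bsub>R\<^esub> sig k (t ^ k * y) = sig (Suc k) (t ^ Suc k * y)"
proof -
  have "sig 1 t \<otimes>\<^bsub>R\<^esub> sig k (t ^ k * y)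
      = cls (\<lambda>m. if m = 0 then 0 else t * (if m - 1 = k then t ^ k * y else 0))"
    unfolding sig_def[of k] by (rule sig1_mult[OF gseq_sig[OF T_I]])
  also have "\<dots> = sig (Suc k) (t ^ Suc k * y)"
    unfolding sig_def by (rule arg_cong[of _ _ cls]) (auto simp: fun_eq_iff mult.assoc)
  finally show ?thesis .
qed

definition psum :: "nat \<Rightarrow> (nat \<Rightarrow> 'b set) \<Rightarrow> nat \<Rightarrow> 'b set" where
  "psum K g = cls (\<lambda>i. if i < K then rep (g i) else 0)"

lemma End_unique:
  assumes P: "\<Phi> \<in> End_kn R (gr_scalar \<iota> t) (gr_t t)" and Q: "\<Psi> \<in> End_kn R (gr_scalar \<iota> t) (gr_t t)"
    and eq: "\<And>b. \<Phi> (sig 0 b) = \<Psi> (sig 0 b)"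
  shows "\<Phi> = \<Psi>"
proof -
  have S: "\<Phi> (sig k (t ^ k * y)) = \<Psi> (sig k (t ^ k * y))" for k y
  proof (induction k arbitrary: y)
    case 0 then show ?case using eq by simp
  next
    case (Suc k)
    have c: "sig k (t ^ k * y) \<in> carrier R" by (rule sig_carrier[OF T_I])
    have "\<Phi> (sig (Suc k) (t ^ Suc k * y)) = \<Phi> (gr_t t \<otimes>\<^bsub>R\<^esub> sig k (t ^ k * y))"
      unfolding gr_t_sig sig_t_step ..
    also have "\<dots> = gr_t t \<otimes>\<^bsub>R\<^esub> \<Phi> (sig k (t ^ k * y))" by (rule End_tt[OF P c])
    also have "\<dots> = gr_t t \<otimes>\<^bsub>R\<^esub> \<Psi> (sig k (t ^ k * y))" using Suc.IH by simp
    also have "\<dots> = \<Psi> (gr_t t \<otimes>\<^bsub>R\<^esub> sig k (t ^ k * y))" by (rule End_tt[OF Q c, symmetric])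
    also have "\<dots> = \<Psi> (sig (Suc k) (t ^ Suc k * y))" unfolding gr_t_sig sig_t_step ..
    finally show ?case .
  qed
  have S': "\<Phi> (sig k x) = \<Psi> (sig k x)" if "x \<in> T k" for k x
    using that S unfolding T_iff by blast
  have Pc: "g \<in> carrier R \<Longrightarrow> psum K g \<in> carrier R" for K g
    unfolding psum_def by (rule cls_carrier) (use carrier_gseq in \<open>auto simp: gseq_def\<close>)
  have PS: "g \<in> carrier R \<Longrightarrow> \<Phi> (psum K g) = \<Psi> (psum K g)" for K g
  proof (induction K)
    case 0
    have "psum 0 g = sig 0 0" unfolding psum_def sig_def by simp
    then show ?case using eq by simp
  next
    case (Suc K)
    have gK: "rep (g K) \<in> T K" using carrier_gseq[OF Suc.prems] unfolding gseq_def by blast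
    have "psum (Suc K) g = psum K g \<oplus>\<^bsub>R\<^esub> sig K (rep (g K))"
      unfolding psum_def sig_def add_cls by (rule arg_cong[of _ _ cls]) (auto simp: fun_eq_iff)
    then show ?case
      using End_add[OF P Pc[OF Suc.prems] sig_carrier[OF gK]] End_add[OF Q Pc[OF Suc.prems] sig_carrier[OF gK]]
        Suc.IH[OF Suc.prems] S'[OF gK] by simp
  qed
  have full: "g \<in> carrier R \<Longrightarrow> psum (Suc n) g = g" for g
  proof -
    assume g: "g \<in> carrier R"
    have "psum (Suc n) g = cls (\<lambda>i. rep (g i))"
      unfolding psum_def
    proof (rule cls_eqI)
      fix i
      show "(if i < Suc n then rep (g i) else 0) - rep (g i) \<in> T (Suc i)"
      proof (cases "i < Suc n")
        case False
        then have "rep (g i) = 0" using carrier_gseq[OF g] T_big[of i] unfolding gseq_def by auto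
        then show ?thesis by simp
      qed simp
    qed
    then show ?thesis using carrier_cls[OF g] by simp
  qed
  show ?thesis
  proof (rule extensionalityI[OF End_ext[OF P] End_ext[OF Q]])
    fix g assume "g \<in> carrier R"
    then show "\<Phi> g = \<Psi> g" using PS[of g "Suc n"] full[of g] by simp
  qed
qed

end



locale Bflat = Bctx \<iota> t n for \<iota> :: "'k::field \<Rightarrow> 'b::ring_1" and t n +
  fixes \<psi> :: "(nat \<Rightarrow> 'b set) \<Rightarrow> nat \<Rightarrow> 'a::comm_ring_1"
  assumes hom: "\<psi> \<in> ring_hom (gr_ring t) (tensor_kn n)"
    and bij: "bij_betw \<psi> (carrier (gr_ring t)) (carrier (tensor_kn n))"
    and pt: "\<psi> (gr_t t) = t_kn n"
begin

abbreviation S :: "(nat \<Rightarrow> 'a) ring" where "S \<equiv> tensor_kn n"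

lemma S_carrier: "a \<in> carrier S \<longleftrightarrow> (\<forall>i>n. a i = 0)"
  by (simp add: tensor_kn_def)

lemma S_add: "a \<oplus>\<^bsub>S\<^esub> b = (\<lambda>i. a i + b i)"
  by (simp add: tensor_kn_def)

lemma S_tk: "t_kn n \<otimes>\<^bsub>S\<^esub> a = (\<lambda>m. if 1 \<le> m \<and> m \<le> n then a (m - 1) else 0)"
proof
  fix m
  show "(t_kn n \<otimes>\<^bsub>S\<^esub> a) m = (if 1 \<le> m \<and> m \<le> n then a (m - 1) else 0)"
  proof (cases "m \<le> n")
    case True
    have "(t_kn n \<otimes>\<^bsub>S\<^esub> a) m = (\<Sum>i\<le>m. (if i = 1 \<and> 1 \<le> n then 1 else 0) * a (m - i))"
      using True by (simp add: tensor_kn_def t_kn_def)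
    also have "\<dots> = (\<Sum>i\<le>m. if i = 1 then (if 1 \<le> n then a (m - 1) else 0) else 0)"
      by (rule sum.cong) auto
    also have "\<dots> = (if 1 \<le> m \<and> m \<le> n then a (m - 1) else 0)"
      using True by (simp add: sum.delta)
    finally show ?thesis .
  next
    case False then show ?thesis by (simp add: tensor_kn_def)
  qed
qed

lemma psi_carrier: "g \<in> carrier R \<Longrightarrow> \<psi> g \<in> carrier S"
  by (rule ring_hom_closed[OF hom])

lemma psi_mult: "g \<in> carrier R \<Longrightarrow> h \<in> carrier R \<Longrightarrow> \<psi> (g \<otimes>\<^bsub>R\<^esub> h) = \<psi> g \<otimes>\<^bsub>S\<^esub> \<psi> h"
  by (rule ring_hom_mult[OF hom])

lemma psi_add: "g \<in> carrier R \<Longrightarrow> h \<in> carrier R \<Longrightarrow> \<psi> (g \<oplus>\<^bsub>R\<^esub> h) = \<psi> g \<oplus>\<^bsub>S\<^esub> \<psi> h"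
  by (rule ring_hom_add[OF hom])

lemma psi_inj: "g \<in> carrier R \<Longrightarrow> h \<in> carrier R \<Longrightarrow> \<psi> g = \<psi> h \<Longrightarrow> g = h"
  using bij unfolding bij_betw_def inj_on_def by blast

lemma psi_surj: "a \<in> carrier S \<Longrightarrow> \<exists>h\<in>carrier R. \<psi> h = a"
proof -
  assume a: "a \<in> carrier S"
  have "a \<in> \<psi> ` carrier R" using bij a unfolding bij_betw_def by simp
  then show ?thesis by (auto simp: image_iff)
qed

lemma gr_t_carrier: "gr_t t \<in> carrier R"
  unfolding gr_t_sig by (rule sig_carrier[OF t_T1])

lemma psi_zero: "\<psi> \<zero>\<^bsub>R\<^esub> = (\<lambda>_. 0)"
proof -
  have zz: "\<zero>\<^bsub>R\<^esub> \<oplus>\<^bsub>R\<^esub> \<zero>\<^bsub>R\<^esub> = \<zero>\<^bsub>R\<^esub>" unfolding zero_R add_cls by simp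
  have "\<psi> \<zero>\<^bsub>R\<^esub> = \<psi> \<zero>\<^bsub>R\<^esub> \<oplus>\<^bsub>S\<^esub> \<psi> \<zero>\<^bsub>R\<^esub>"
    using psi_add[OF zero_carrier zero_carrier] zz by simp
  then have "\<forall>i. \<psi> \<zero>\<^bsub>R\<^esub> i = \<psi> \<zero>\<^bsub>R\<^esub> i + \<psi> \<zero>\<^bsub>R\<^esub> i" unfolding S_add by (metis)
  then show ?thesis by (simp add: fun_eq_iff)
qed

lemma Zlemma:
  "k \<le> n \<Longrightarrow> g \<in> carrier R \<Longrightarrow> (\<forall>i<k. \<psi> g i = 0) \<Longrightarrow> (\<forall>i<k. rep (g i) \<in> T (Suc i))"
proof (induction k arbitrary: g)
  case 0 then show ?case by simp
next
  case (Suc k)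
  define a where "a = \<psi> g"
  have aS: "a \<in> carrier S" unfolding a_def by (rule psi_carrier[OF Suc.prems(2)])
  define a1 where "a1 = (\<lambda>i. if i < n then a (Suc i) else (0::'a))"
  have a1S: "a1 \<in> carrier S" unfolding S_carrier a1_def by simp
  obtain h1 where h1: "h1 \<in> carrier R" "\<psi> h1 = a1" using psi_surj[OF a1S] by blast
  have prod_c: "gr_t t \<otimes>\<^bsub>R\<^esub> h1 \<in> carrier R"
  proof -
    obtain x where x: "gseq x" "h1 = cls x" using carrier_obtain h1(1) by blast
    show ?thesis unfolding x(2) gr_t_sig sig1_mult[OF x(1)] by (rule cls_carrier[OF gseq_tshift[OF x(1)]])
  qed
  have "\<psi> (gr_t t \<otimes>\<^bsub>R\<^esub> h1) = t_kn n \<otimes>\<^bsub>S\<^esub> a1"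
    using psi_mult[OF gr_t_carrier h1(1)] pt h1(2) by simp
  also have "\<dots> = a"
  proof
    fix m
    show "(t_kn n \<otimes>\<^bsub>S\<^esub> a1) m = a m"
    proof (cases "1 \<le> m \<and> m \<le> n")
      case True
      then have "m - 1 < n" "Suc (m - 1) = m" by auto
      then show ?thesis unfolding S_tk a1_def using True by simp
    next
      case False
      then have "m = 0 \<or> m > n" by auto
      moreover have "a 0 = 0" using Suc.prems(3) unfolding a_def by auto
      moreover have "m > n \<Longrightarrow> a m = 0" using aS unfolding S_carrier by auto
      ultimately show ?thesis unfolding S_tk using False by auto
    qed
  qed
  finally have "\<psi> (gr_t t \<otimes>\<^bsub>R\<^esub> h1) = \<psi> g" unfolding a_def .
  then have geq: "gr_t t \<otimes>\<^bsub>R\<^esub> h1 = g" by (rule psi_inj[OF prod_c Suc.prems(2)])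
  have "\<forall>i<k. \<psi> h1 i = 0"
    using Suc.prems(1,3) unfolding h1(2) a1_def a_def by auto
  then have IH: "\<forall>i<k. rep (h1 i) \<in> T (Suc i)" using Suc.IH[OF _ h1(1)] Suc.prems(1) by simp
  obtain x where x: "gseq x" "h1 = cls x" using carrier_obtain h1(1) by blast
  have xk: "\<forall>i<k. x i \<in> T (Suc i)"
  proof (intro allI impI)
    fix i assume "i < k"
    have d: "rep (cls x i) - x i \<in> T (Suc i)" by (rule rep_cls)
    have r: "rep (cls x i) \<in> T (Suc i)" using IH \<open>i < k\<close> x(2) by simp
    have "rep (cls x i) - (rep (cls x i) - x i) \<in> T (Suc i)" by (rule T_diff[OF r d])
    then show "x i \<in> T (Suc i)" by simp
  qed
  have gx: "g = cls (\<lambda>m. if m = 0 then 0 else t * x (m - 1))"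
    using geq unfolding x(2) gr_t_sig sig1_mult[OF x(1)] by simp
  show ?case
  proof (intro allI impI)
    fix i assume i: "i < Suc k"
    have "(if i = 0 then 0 else t * x (i - 1)) \<in> T (Suc i)"
    proof (cases i)
      case (Suc j)
      then have "x j \<in> T (Suc j)" using xk i by auto
      then show ?thesis using Suc T_t by simp
    qed simp
    moreover have "rep (g i) - (if i = 0 then 0 else t * x (i - 1)) \<in> T (Suc i)"
      unfolding gx by (rule rep_cls)
    ultimately have "rep (g i) - (if i = 0 then 0 else t * x (i - 1)) + (if i = 0 then 0 else t * x (i - 1)) \<in> T (Suc i)"
      by (intro T_add)
    then show "rep (g i) \<in> T (Suc i)" by simp
  qed
qed

lemma flat1:
  assumes j: "j < n" and b: "b \<in> T j" and tb: "t * b \<in> T (Suc (Suc j))"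
  shows "b \<in> T (Suc j)"
proof -
  have gc: "sig j b \<in> carrier R" by (rule sig_carrier[OF b])
  have "gr_t t \<otimes>\<^bsub>R\<^esub> sig j b = cls (\<lambda>m. if m = 0 then 0 else t * (if m - 1 = j then b else 0))"
    unfolding gr_t_sig sig_def[of j] by (rule sig1_mult[OF gseq_sig[OF b]])
  also have "\<dots> = \<zero>\<^bsub>R\<^esub>"
    unfolding zero_R
  proof (rule cls_eqI)
    fix m
    show "(if m = 0 then 0 else t * (if m - 1 = j then b else 0)) - 0 \<in> T (Suc m)"
      using tb by (cases m) auto
  qed
  finally have "\<psi> (gr_t t \<otimes>\<^bsub>R\<^esub> sig j b) = (\<lambda>_. 0)" using psi_zero by simp
  then have "t_kn n \<otimes>\<^bsub>S\<^esub> \<psi> (sig j b) = (\<lambda>_. 0)"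
    using psi_mult[OF gr_t_carrier gc] pt by simp
  then have "\<forall>m. (1 \<le> m \<and> m \<le> n) \<longrightarrow> \<psi> (sig j b) (m - 1) = 0"
    unfolding S_tk by (metis)
  then have "\<forall>i<n. \<psi> (sig j b) i = 0"
    by (metis Suc_leI diff_Suc_1 le_add1 plus_1_eq_Suc)
  then have "\<forall>i<n. rep (sig j b i) \<in> T (Suc i)" using Zlemma[OF le_refl gc] by blast
  then have r: "rep (sig j b j) \<in> T (Suc j)" using j by blast
  have "rep (sig j b j) - b \<in> T (Suc j)" using rep_cls[of "\<lambda>i. if i = j then b else 0" j]
    unfolding sig_def by simp
  then have "- (rep (sig j b j) - b) + rep (sig j b j) \<in> T (Suc j)" using r by (intro T_add T_uminus)
  then show ?thesis by simp
qed

lemma flatG: "i + j \<le> n \<Longrightarrow> x \<in> T j \<Longrightarrow> t ^ i * x \<in> T (Suc (i + j)) \<Longrightarrow> x \<in> T (Suc j)"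
proof (induction i arbitrary: j x)
  case 0 then show ?case by simp
next
  case (Suc i)
  have "t ^ i * (t * x) \<in> T (Suc (i + Suc j))"
    using Suc.prems(3) by (simp add: mult.assoc[symmetric] power_Suc2[symmetric])
  then have "t * x \<in> T (Suc (Suc j))" using Suc.IH[of "Suc j" "t * x"] Suc.prems(1) T_t[OF Suc.prems(2)] by simp
  then show ?case using flat1[OF _ Suc.prems(2)] Suc.prems(1) by simp
qed

end



context Bflat
begin

lemma T_kill: "m \<le> n \<Longrightarrow> w \<in> T (Suc m) \<Longrightarrow> t ^ (n - m) * w = 0"
proof -
  assume m: "m \<le> n" and w: "w \<in> T (Suc m)"
  have "t ^ (n - m) * w \<in> T (n - m + Suc m)" by (rule T_tpow[OF w])
  then have "t ^ (n - m) * w \<in> T (Suc n)" using m by simp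
  then show ?thesis using T_big[of "Suc n"] by simp
qed

lemma T_kill_eq: "m \<le> n \<Longrightarrow> u - v \<in> T (Suc m) \<Longrightarrow> t ^ (n - m) * u = t ^ (n - m) * v"
  using T_kill[of m "u - v"] by (simp add: right_diff_distrib)

lemma T_in_diff: "u - v \<in> T i \<Longrightarrow> v \<in> T i \<Longrightarrow> u \<in> T i"
  using T_add[of "u - v" i v] by simp

lemma gD_zero_op:
  assumes G: "G \<in> gr_D \<iota> t" and r: "\<And>i x. rep (G i) x \<in> T (Suc i)"
  shows "gamma t G = (\<lambda>g\<in>carrier R. \<zero>\<^bsub>R\<^esub>)"
proof -
  obtain M where "fam M (\<lambda>i. rep (G i))" using gD_fam[OF G] by blast
  then have E: "efam (\<lambda>i. rep (G i))" unfolding fam_def by blast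
  show ?thesis unfolding gamma_Op
  proof (rule ext)
    fix g
    show "Op (\<lambda>i. rep (G i)) g = (\<lambda>g\<in>carrier R. \<zero>\<^bsub>R\<^esub>) g"
    proof (cases "g \<in> carrier R")
      case False then show ?thesis unfolding Op_def by simp
    next
      case True
      then obtain x where x: "gseq x" "g = cls x" using carrier_obtain by blast
      have "cls (esum (\<lambda>i. rep (G i)) x) = cls (\<lambda>_. 0)"
      proof (rule cls_eqI)
        fix m
        have "(\<Sum>i\<le>m. rep (G i) (x (m - i))) \<in> T (Suc m)"
        proof (rule T_sum')
          fix i assume i: "i \<in> {..m}"
          have "rep (G i) (x (m - i)) \<in> T (m - i + Suc i)"
            by (rule endo_T[OF efam_endo[OF E] r]) (use x(1) in \<open>simp add: gseq_def\<close>)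
          then show "rep (G i) (x (m - i)) \<in> T (Suc m)" using i by simp
        qed
        then show "esum (\<lambda>i. rep (G i)) x m - 0 \<in> T (Suc m)" unfolding esum_def by simp
      qed
      then show ?thesis using True x Op_cls[OF E x(1)] zero_R by simp
    qed
  qed
qed

lemma L_inj:
  assumes inj: "inj_on (gamma t) (gr_D \<iota> t)" and d: "d \<in> DB" and dr: "\<And>x. d x \<in> T 1"
  shows "\<exists>e\<in>DB. d = (\<lambda>x. t * e x)"
proof -
  define X where "X = (\<lambda>i::nat. if i = 0 then d else (0 :: 'b \<Rightarrow> 'b))"
  define G where "G = (\<lambda>i::nat. (+) (X i) ` F (Suc i))"
  define Z where "Z = (\<lambda>i. (+) (0 :: 'b \<Rightarrow> 'b) ` F (Suc i))"
  have dF: "d \<in> F 0" unfolding F_iff using d by (intro bexI[of _ d]) simp_all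
  have XF: "X i \<in> F i" for i unfolding X_def using dF F_0 by simp
  have XT: "X i x \<in> T (Suc i)" for i x unfolding X_def using dr by simp
  have G: "G \<in> gr_D \<iota> t" unfolding gD_iff G_def using XF by blast
  have Z: "Z \<in> gr_D \<iota> t" unfolding gD_iff Z_def using F_0 by blast
  have "rep (G i) x \<in> T (Suc i)" for i x
  proof -
    have "(rep (G i) - X i) x \<in> T (Suc i)" unfolding G_def by (rule F_T[OF F_rep])
    then have "rep (G i) x - X i x \<in> T (Suc i)" by simp
    then show ?thesis using XT[of i x] by (rule T_in_diff)
  qed
  then have gG: "gamma t G = (\<lambda>g\<in>carrier R. \<zero>\<^bsub>R\<^esub>)" by (rule gD_zero_op[OF G])
  have "rep (Z i) x \<in> T (Suc i)" for i x
  proof -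
    have "(rep (Z i) - 0) x \<in> T (Suc i)" unfolding Z_def by (rule F_T[OF F_rep])
    then show ?thesis by simp
  qed
  then have gZ: "gamma t Z = (\<lambda>g\<in>carrier R. \<zero>\<^bsub>R\<^esub>)" by (rule gD_zero_op[OF Z])
  have "G = Z" by (rule inj_onD[OF inj _ G Z]) (simp only: gG gZ)
  then have "G 0 = Z 0" by simp
  then have "(+) d ` F 1 = (+) 0 ` F 1" unfolding G_def Z_def X_def by simp
  then have "d - 0 \<in> F 1" by (simp only: F_coset_eq)
  then obtain e where "e \<in> DB" "d = (\<lambda>x. t ^ 1 * e x)" unfolding F_iff by auto
  then show ?thesis by auto
qed

lemma L_pow:
  assumes inj: "inj_on (gamma t) (gr_D \<iota> t)"
  shows "k \<le> n \<Longrightarrow> d \<in> DB \<Longrightarrow> (\<forall>x. d x \<in> T k) \<Longrightarrow> \<exists>e\<in>DB. d = (\<lambda>x. t ^ k * e x)"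
proof (induction k arbitrary: d)
  case 0 then show ?case by auto
next
  case (Suc k)
  have dk: "\<forall>x. d x \<in> T k" using Suc.prems(3) T_Suc by blast
  have "\<exists>e\<in>DB. d = (\<lambda>x. t ^ k * e x)" using Suc.IH[of d] Suc.prems(1,2) dk by simp
  then obtain e where e: "e \<in> DB" "d = (\<lambda>x. t ^ k * e x)" by blast
  have "e x \<in> T 1" for x
  proof -
    have "t ^ k * e x \<in> T (Suc (k + 0))" using Suc.prems(3) e(2) by simp
    then show ?thesis using flatG[of k 0 "e x"] Suc.prems(1) T0 by simp
  qed
  then obtain e' where e': "e' \<in> DB" "e = (\<lambda>x. t * e' x)" using L_inj[OF inj e(1)] by blast
  have "d = (\<lambda>x. t ^ Suc k * e' x)" unfolding e(2) e'(2) by (simp add: mult.assoc t_tpow)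
  then show ?case using e'(1) by blast
qed

lemma L_surj:
  assumes surj: "gamma t ` gr_D \<iota> t = diff_ops R (gr_scalar \<iota> t) (gr_t t)"
    and d: "d \<in> DB" and dr: "\<And>x. d x \<in> T 1"
  shows "\<exists>e\<in>DB. d = (\<lambda>x. t * e x)"
proof -
  have claim: "j \<le> n \<Longrightarrow> d \<in> DB \<Longrightarrow> (\<forall>x. d x \<in> T (Suc n - j)) \<Longrightarrow> \<exists>e\<in>DB. d = (\<lambda>x. t * e x)" for j d
  proof (induction j arbitrary: d)
    case 0
    then have "d = (\<lambda>x. t * (0::'b \<Rightarrow> 'b) x)" using T_big[of "Suc n"] by (auto simp: fun_eq_iff)
    then show ?case using DB_zero by blast
  next
    case (Suc j)
    define k where "k = n - j"
    have k1: "1 \<le> k" and kn: "Suc n - Suc j = k" "Suc n - j = Suc k" using Suc.prems(1) unfolding k_def by auto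
    have dT: "d x \<in> T k" for x using Suc.prems(3) kn by simp
    obtain M where M: "d \<in> Dm M" using Suc.prems(2) unfolding DB_iff by blast
    define E where "E = (\<lambda>i. if i = k then d else (0 :: 'b \<Rightarrow> 'b))"
    have famE: "fam M E"
      unfolding fam_def efam_def E_def
      using M Dm_zero Dm_endo endo_zero_fun dT by auto
    then have "Op E \<in> diff_ops R (gr_scalar \<iota> t) (gr_t t)" by (rule Op_diff_ops)
    then have "Op E \<in> gamma t ` gr_D \<iota> t" using surj by simp
    then obtain G where G: "G \<in> gr_D \<iota> t" "gamma t G = Op E" by auto
    obtain e where e: "e \<in> DB" "rep (G k) = (\<lambda>x. t ^ k * e x)" using gD_repD[OF G(1)] by blast
    have "t ^ k * e b - d b \<in> T (Suc k)" for b
    proof -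
      have "cls (\<lambda>m. rep (G m) b) = cls (\<lambda>m. E m b)"
        using gamma_sig0[OF G(1)] G(2) Op_sig0[of E b] famE unfolding fam_def by simp
      then have "rep (G k) b - E k b \<in> T (Suc k)" unfolding cls_eq by blast
      then show ?thesis unfolding e(2) E_def by simp
    qed
    define d' where "d' = d - (\<lambda>x. t ^ k * e x)"
    have d'DB: "d' \<in> DB" unfolding d'_def by (rule DB_minus[OF Suc.prems(2) DB_tmul[OF e(1)]])
    have "d' x \<in> T (Suc n - j)" for x
      unfolding d'_def kn using T_uminus[OF \<open>t ^ k * e x - d x \<in> T (Suc k)\<close>] by simp
    then obtain e' where e': "e' \<in> DB" "d' = (\<lambda>x. t * e' x)" using Suc.IH[OF _ d'DB] Suc.prems(1) by auto
    have tk: "t ^ k = t * t ^ (k - 1)" using k1 by (cases k) auto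
    have "d = (\<lambda>x. t * ((\<lambda>x. t ^ (k - 1) * e x) + e') x)"
    proof
      fix x
      have "d x = d' x + t ^ k * e x" unfolding d'_def by simp
      also have "\<dots> = t * ((\<lambda>x. t ^ (k - 1) * e x) + e') x"
        unfolding e'(2) tk by (simp add: distrib_left mult.assoc add.commute)
      finally show "d x = t * ((\<lambda>x. t ^ (k - 1) * e x) + e') x" .
    qed
    moreover have "(\<lambda>x. t ^ (k - 1) * e x) + e' \<in> DB" by (rule DB_plus[OF DB_tmul[OF e(1)] e'(1)])
    ultimately show ?case by blast
  qed
  show ?thesis using claim[of n d] d dr by simp
qed

theorem inj_of_surj:
  assumes surj: "gamma t ` gr_D \<iota> t = diff_ops R (gr_scalar \<iota> t) (gr_t t)"
  shows "inj_on (gamma t) (gr_D \<iota> t)"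
proof (rule inj_onI)
  fix G G' assume G: "G \<in> gr_D \<iota> t" and G': "G' \<in> gr_D \<iota> t" and eq: "gamma t G = gamma t G'"
  show "G = G'"
  proof
    fix m
    obtain d where d: "d \<in> DB" "rep (G m) = (\<lambda>x. t ^ m * d x)" using gD_repD[OF G] by blast
    obtain d' where d': "d' \<in> DB" "rep (G' m) = (\<lambda>x. t ^ m * d' x)" using gD_repD[OF G'] by blast
    have "rep (G m) - rep (G' m) \<in> F (Suc m)"
    proof (cases "m \<le> n")
      case True
      have "(d - d') b \<in> T 1" for b
      proof -
        have "cls (\<lambda>m. rep (G m) b) = cls (\<lambda>m. rep (G' m) b)"
          using gamma_sig0[OF G] gamma_sig0[OF G'] eq by simp
        then have "rep (G m) b - rep (G' m) b \<in> T (Suc m)" unfolding cls_eq by blast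
        then have "t ^ m * (d b - d' b) \<in> T (Suc (m + 0))" unfolding d(2) d'(2) by (simp add: right_diff_distrib)
        then show ?thesis using flatG[of m 0 "d b - d' b"] True T0 by simp
      qed
      then obtain e where e: "e \<in> DB" "d - d' = (\<lambda>x. t * e x)" using L_surj[OF surj DB_minus[OF d(1) d'(1)]] by blast
      have "rep (G m) - rep (G' m) = (\<lambda>x. t ^ Suc m * e x)"
      proof
        fix x
        have "d x - d' x = t * e x" using fun_cong[OF e(2), of x] by simp
        then show "(rep (G m) - rep (G' m)) x = t ^ Suc m * e x"
          unfolding d(2) d'(2) by (simp add: right_diff_distrib[symmetric] mult.assoc t_tpow power_Suc2)
      qed
      then show ?thesis unfolding F_iff using e(1) by blast
    next
      case False
      then have "rep (G m) - rep (G' m) = 0" unfolding d(2) d'(2) using t_big[of m] by (simp add: fun_eq_iff)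
      then show ?thesis using F_0 by simp
    qed
    then have "(+) (rep (G m)) ` F (Suc m) = (+) (rep (G' m)) ` F (Suc m)" by (simp only: F_coset_eq)
    then show "G m = G' m" using gD_rep(2)[OF G, of m] gD_rep(2)[OF G', of m] by simp
  qed
qed

end



context Bflat
begin

definition Dop :: "nat \<Rightarrow> ((nat \<Rightarrow> 'b set) \<Rightarrow> (nat \<Rightarrow> 'b set)) \<Rightarrow> 'b \<Rightarrow> 'b" where
  "Dop m \<Phi> = (\<lambda>b. t ^ (n - m) * rep (\<Phi> (sig 0 b) m))"

lemma sig0_carrier: "sig 0 b \<in> carrier R"
  by (rule sig_carrier[OF T0])

lemma mult_closed: "g \<in> carrier R \<Longrightarrow> h \<in> carrier R \<Longrightarrow> g \<otimes>\<^bsub>R\<^esub> h \<in> carrier R"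
proof -
  assume "g \<in> carrier R" "h \<in> carrier R"
  then obtain x y where xy: "gseq x" "g = cls x" "gseq y" "h = cls y" using carrier_obtain by blast
  show ?thesis unfolding xy(2,4) mult_cls[OF xy(1,3)] by (rule cls_carrier[OF gseq_conv[OF xy(1,3)]])
qed

lemma minus_closed: "g \<in> carrier R \<Longrightarrow> h \<in> carrier R \<Longrightarrow> g \<ominus>\<^bsub>R\<^esub> h \<in> carrier R"
proof -
  assume "g \<in> carrier R" "h \<in> carrier R"
  then obtain x y where xy: "gseq x" "g = cls x" "gseq y" "h = cls y" using carrier_obtain by blast
  show ?thesis unfolding xy(2,4) minus_cls[OF xy(3)] by (rule cls_carrier[OF gseq_diff[OF xy(1,3)]])
qed

lemma lie_funcset: "\<Phi> \<in> carrier R \<rightarrow> carrier R \<Longrightarrow> f \<in> carrier R \<Longrightarrow> lie_comm R f \<Phi> \<in> carrier R \<rightarrow> carrier R"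
  unfolding lie_comm_def by (auto intro!: minus_closed mult_closed)

lemma iter_funcset: "set fs \<subseteq> carrier R \<Longrightarrow> \<Phi> \<in> carrier R \<rightarrow> carrier R \<Longrightarrow> iter_comm R fs \<Phi> \<in> carrier R \<rightarrow> carrier R"
proof (induction fs)
  case Nil then show ?case unfolding iter_comm_def by simp
next
  case (Cons f fs)
  have "iter_comm R (f # fs) \<Phi> = lie_comm R f (iter_comm R fs \<Phi>)" unfolding iter_comm_def by simp
  then show ?case using Cons lie_funcset by simp
qed

lemma rep_T: "g \<in> carrier R \<Longrightarrow> rep (g m) \<in> T m"
  using carrier_gseq unfolding gseq_def by blast

lemma Dop_lc:
  assumes P: "\<Phi> \<in> carrier R \<rightarrow> carrier R" and mn: "m \<le> n"
  shows "lc f (Dop m \<Phi>) = Dop m (lie_comm R (sig 0 f) \<Phi>)"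
proof (rule ext)
  fix b
  define yb where "yb = (\<lambda>i. rep (\<Phi> (sig 0 b) i))"
  define yfb where "yfb = (\<lambda>i. rep (\<Phi> (sig 0 (f * b)) i))"
  have cb: "\<Phi> (sig 0 b) \<in> carrier R" using P sig0_carrier by blast
  have cfb: "\<Phi> (sig 0 (f * b)) \<in> carrier R" using P sig0_carrier by blast
  have gb: "gseq yb" unfolding yb_def by (rule carrier_gseq[OF cb])
  have gfb: "gseq yfb" unfolding yfb_def by (rule carrier_gseq[OF cfb])
  have eb: "\<Phi> (sig 0 b) = cls yb" unfolding yb_def by (rule carrier_cls[OF cb])
  have efb: "\<Phi> (sig 0 (f * b)) = cls yfb" unfolding yfb_def by (rule carrier_cls[OF cfb])
  have "lie_comm R (sig 0 f) \<Phi> (sig 0 b) = (sig 0 f \<otimes>\<^bsub>R\<^esub> \<Phi> (sig 0 b)) \<ominus>\<^bsub>R\<^esub> \<Phi> (sig 0 f \<otimes>\<^bsub>R\<^esub> sig 0 b)"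
    unfolding lie_comm_def using sig0_carrier by simp
  also have "\<dots> = (sig 0 f \<otimes>\<^bsub>R\<^esub> cls yb) \<ominus>\<^bsub>R\<^esub> cls yfb"
    unfolding sig0_sig0 eb efb ..
  also have "\<dots> = cls (\<lambda>i. f * yb i - yfb i)"
    unfolding sig0_mult[OF gb] minus_cls[OF gfb] ..
  finally have L: "lie_comm R (sig 0 f) \<Phi> (sig 0 b) = cls (\<lambda>i. f * yb i - yfb i)" .
  have "rep (lie_comm R (sig 0 f) \<Phi> (sig 0 b) m) - (f * yb m - yfb m) \<in> T (Suc m)"
    unfolding L by (rule rep_cls)
  then have K: "t ^ (n - m) * rep (lie_comm R (sig 0 f) \<Phi> (sig 0 b) m) = t ^ (n - m) * (f * yb m - yfb m)"
    by (rule T_kill_eq[OF mn])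
  show "lc f (Dop m \<Phi>) b = Dop m (lie_comm R (sig 0 f) \<Phi>) b"
    unfolding lc_def Dop_def K by (simp add: yb_def yfb_def right_diff_distrib tpow_left)
qed

lemma Dop_iter:
  assumes P: "\<Phi> \<in> carrier R \<rightarrow> carrier R" and mn: "m \<le> n"
  shows "foldr lc fs (Dop m \<Phi>) = Dop m (iter_comm R (map (sig 0) fs) \<Phi>)"
proof (induction fs)
  case Nil then show ?case unfolding iter_comm_def by simp
next
  case (Cons f fs)
  have sc: "set (map (sig 0) fs) \<subseteq> carrier R" using sig0_carrier by auto
  have "foldr lc (f # fs) (Dop m \<Phi>) = lc f (foldr lc fs (Dop m \<Phi>))" by simp
  also have "\<dots> = lc f (Dop m (iter_comm R (map (sig 0) fs) \<Phi>))" by (simp only: Cons.IH)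
  also have "\<dots> = Dop m (lie_comm R (sig 0 f) (iter_comm R (map (sig 0) fs) \<Phi>))"
    by (rule Dop_lc[OF iter_funcset[OF sc P] mn])
  also have "\<dots> = Dop m (iter_comm R (map (sig 0) (f # fs)) \<Phi>)" unfolding iter_comm_def by simp
  finally show ?case .
qed

lemma rep_zero_T: "rep (\<zero>\<^bsub>R\<^esub> m) \<in> T (Suc m)"
  using rep_cls[of "\<lambda>_. 0" m] unfolding zero_R by simp

lemma Dop_endo:
  assumes P: "\<Phi> \<in> End_kn R (gr_scalar \<iota> t) (gr_t t)" and mn: "m \<le> n"
  shows "endo (Dop m \<Phi>)"
proof -
  have cb: "\<Phi> (sig 0 b) \<in> carrier R" for b by (rule End_carrier[OF P sig0_carrier])
  have gb: "gseq (\<lambda>i. rep (\<Phi> (sig 0 b) i))" for b by (rule carrier_gseq[OF cb])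
  have eb: "\<Phi> (sig 0 b) = cls (\<lambda>i. rep (\<Phi> (sig 0 b) i))" for b by (rule carrier_cls[OF cb])
  have 1: "Dop m \<Phi> (b + c) = Dop m \<Phi> b + Dop m \<Phi> c" for b c
  proof -
    have "sig 0 (b + c) = sig 0 b \<oplus>\<^bsub>R\<^esub> sig 0 c"
      unfolding sig_def add_cls by (rule arg_cong[of _ _ cls]) (auto simp: fun_eq_iff)
    then have "\<Phi> (sig 0 (b + c)) = \<Phi> (sig 0 b) \<oplus>\<^bsub>R\<^esub> \<Phi> (sig 0 c)"
      using End_add[OF P sig0_carrier sig0_carrier] by simp
    also have "\<dots> = cls (\<lambda>i. rep (\<Phi> (sig 0 b) i) + rep (\<Phi> (sig 0 c) i))"
      by (subst eb[of b], subst eb[of c]) (rule add_cls)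
    finally have "rep (\<Phi> (sig 0 (b + c)) m) - (rep (\<Phi> (sig 0 b) m) + rep (\<Phi> (sig 0 c) m)) \<in> T (Suc m)"
      using rep_cls by simp
    then have "t ^ (n - m) * rep (\<Phi> (sig 0 (b + c)) m) = t ^ (n - m) * (rep (\<Phi> (sig 0 b) m) + rep (\<Phi> (sig 0 c) m))"
      by (rule T_kill_eq[OF mn])
    then show ?thesis unfolding Dop_def by (simp add: distrib_left)
  qed
  have 2: "Dop m \<Phi> (\<iota> c * b) = \<iota> c * Dop m \<Phi> b" for c b
  proof -
    have "sig 0 (\<iota> c * b) = gr_scalar \<iota> t c \<otimes>\<^bsub>R\<^esub> sig 0 b" unfolding gr_scalar_sig sig0_sig0 ..
    then have "\<Phi> (sig 0 (\<iota> c * b)) = gr_scalar \<iota> t c \<otimes>\<^bsub>R\<^esub> \<Phi> (sig 0 b)"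
      using End_scal[OF P sig0_carrier] by simp
    also have "\<dots> = cls (\<lambda>i. \<iota> c * rep (\<Phi> (sig 0 b) i))"
      by (subst eb[of b]) (simp only: gr_scalar_sig sig0_mult[OF gb])
    finally have "rep (\<Phi> (sig 0 (\<iota> c * b)) m) - \<iota> c * rep (\<Phi> (sig 0 b) m) \<in> T (Suc m)"
      using rep_cls by simp
    then have "t ^ (n - m) * rep (\<Phi> (sig 0 (\<iota> c * b)) m) = t ^ (n - m) * (\<iota> c * rep (\<Phi> (sig 0 b) m))"
      by (rule T_kill_eq[OF mn])
    then show ?thesis unfolding Dop_def by (simp add: iota_tpow)
  qed
  have 3: "Dop m \<Phi> (t * b) = t * Dop m \<Phi> b" for b
  proof -
    have "sig 0 (t * b) = \<zero>\<^bsub>R\<^esub>"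
      unfolding sig_def zero_R
    proof (rule cls_eqI)
      fix i show "(if i = 0 then t * b else 0) - 0 \<in> T (Suc i)" using T_t[OF T0, of b] by simp
    qed
    then have "\<Phi> (sig 0 (t * b)) = \<zero>\<^bsub>R\<^esub>" using End_zero[OF P] by simp
    then have "Dop m \<Phi> (t * b) = 0" unfolding Dop_def using T_kill[OF mn rep_zero_T] by simp
    moreover have "t * Dop m \<Phi> b = 0"
    proof -
      have "t * Dop m \<Phi> b = t ^ (n - m) * (t * rep (\<Phi> (sig 0 b) m))" unfolding Dop_def by (rule t_tpow)
      also have "\<dots> = 0" by (rule T_kill[OF mn T_t[OF rep_T[OF cb]]])
      finally show ?thesis .
    qed
    ultimately show ?thesis by simp
  qed
  show ?thesis unfolding endo_def using 1 2 3 by blast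
qed

lemma Dop_Dm:
  assumes D: "\<Delta> \<in> diff_ops_order R (gr_scalar \<iota> t) (gr_t t) M" and mn: "m \<le> n"
  shows "Dop m \<Delta> \<in> Dm M"
proof -
  have E: "\<Delta> \<in> End_kn R (gr_scalar \<iota> t) (gr_t t)" using D unfolding diff_ops_order_def by blast
  have P: "\<Delta> \<in> carrier R \<rightarrow> carrier R" using E unfolding End_kn_def by blast
  have "foldr lc fs (Dop m \<Delta>) = 0" if fs: "length fs = Suc M" for fs
  proof -
    have sc: "set (map (sig 0) fs) \<subseteq> carrier R" using sig0_carrier by auto
    have "iter_comm R (map (sig 0) fs) \<Delta> = (\<lambda>x\<in>carrier R. \<zero>\<^bsub>R\<^esub>)"
      using D sc fs unfolding diff_ops_order_def by auto
    then have "foldr lc fs (Dop m \<Delta>) = Dop m (\<lambda>x\<in>carrier R. \<zero>\<^bsub>R\<^esub>)" using Dop_iter[OF P mn] by simp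
    also have "\<dots> = 0" unfolding Dop_def using sig0_carrier T_kill[OF mn rep_zero_T] by (simp add: fun_eq_iff)
    finally show ?thesis .
  qed
  then show ?thesis unfolding Dm_def using Dop_endo[OF E mn] by blast
qed

lemma surj_of_inj:
  assumes inj: "inj_on (gamma t) (gr_D \<iota> t)" and D: "\<Delta> \<in> diff_ops R (gr_scalar \<iota> t) (gr_t t)"
  shows "\<Delta> \<in> gamma t ` gr_D \<iota> t"
proof -
  obtain M where DM: "\<Delta> \<in> diff_ops_order R (gr_scalar \<iota> t) (gr_t t) M" using D unfolding diff_ops_def by blast
  have E: "\<Delta> \<in> End_kn R (gr_scalar \<iota> t) (gr_t t)" using DM unfolding diff_ops_order_def by blast
  have cb: "\<Delta> (sig 0 b) \<in> carrier R" for b by (rule End_carrier[OF E sig0_carrier])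
  have ex: "\<forall>m. \<exists>e. e \<in> DB \<and> (\<forall>b. t ^ m * e b - rep (\<Delta> (sig 0 b) m) \<in> T (Suc m))"
  proof
    fix m
    show "\<exists>e. e \<in> DB \<and> (\<forall>b. t ^ m * e b - rep (\<Delta> (sig 0 b) m) \<in> T (Suc m))"
    proof (cases "m \<le> n")
      case True
      have DB1: "Dop m \<Delta> \<in> DB" unfolding DB_iff using Dop_Dm[OF DM True] by blast
      have rng: "\<forall>x. Dop m \<Delta> x \<in> T n"
      proof
        fix x
        have "Dop m \<Delta> x \<in> T (n - m + m)" unfolding Dop_def by (rule T_tpow[OF rep_T[OF cb]])
        then show "Dop m \<Delta> x \<in> T n" using True by simp
      qed
      obtain e where e: "e \<in> DB" "Dop m \<Delta> = (\<lambda>x. t ^ n * e x)" using L_pow[OF inj le_refl DB1 rng] by blast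
      have "t ^ m * e b - rep (\<Delta> (sig 0 b) m) \<in> T (Suc m)" for b
      proof -
        define X where "X = t ^ m * e b - rep (\<Delta> (sig 0 b) m)"
        have XT: "X \<in> T m" unfolding X_def by (rule T_diff[OF T_I rep_T[OF cb]])
        have tn: "t ^ (n - m) * (t ^ m * e b) = t ^ n * e b"
          using True by (simp add: mult.assoc[symmetric] power_add[symmetric])
        have "t ^ (n - m) * X = t ^ n * e b - Dop m \<Delta> b"
          unfolding X_def Dop_def by (simp add: right_diff_distrib tn)
        also have "\<dots> = 0" using fun_cong[OF e(2), of b] by simp
        finally have tX: "t ^ (n - m) * X \<in> T (Suc (n - m + m))" by simp
        have "X \<in> T (Suc m)" by (rule flatG[OF _ XT tX]) (use True in simp)
        then show ?thesis unfolding X_def .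
      qed
      then show ?thesis using e(1) by blast
    next
      case False
      have "rep (\<Delta> (sig 0 b) m) = 0" for b using rep_T[OF cb, of b m] T_big[of m] False by simp
      then show ?thesis using DB_zero by (intro exI[of _ 0]) simp
    qed
  qed
  obtain ee where ee: "\<And>m. ee m \<in> DB" "\<And>m b. t ^ m * ee m b - rep (\<Delta> (sig 0 b) m) \<in> T (Suc m)"
    using choice[OF ex] by blast
  define G where "G = (\<lambda>m. (+) (\<lambda>x. t ^ m * ee m x) ` F (Suc m))"
  have XF: "(\<lambda>x. t ^ m * ee m x) \<in> F m" for m unfolding F_iff using ee(1) by blast
  have G: "G \<in> gr_D \<iota> t" unfolding gD_iff G_def using XF by blast
  obtain M' where "fam M' (\<lambda>i. rep (G i))" using gD_fam[OF G] by blast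
  then have GE: "gamma t G \<in> End_kn R (gr_scalar \<iota> t) (gr_t t)" unfolding gamma_Op fam_def using Op_End by blast
  have eq: "gamma t G (sig 0 b) = \<Delta> (sig 0 b)" for b
  proof -
    have "rep (G m) b - rep (\<Delta> (sig 0 b) m) \<in> T (Suc m)" for m
    proof -
      have "(rep (G m) - (\<lambda>x. t ^ m * ee m x)) b \<in> T (Suc m)" unfolding G_def by (rule F_T[OF F_rep])
      then have "rep (G m) b - t ^ m * ee m b \<in> T (Suc m)" by simp
      then have "(rep (G m) b - t ^ m * ee m b) + (t ^ m * ee m b - rep (\<Delta> (sig 0 b) m)) \<in> T (Suc m)"
        using ee(2) by (rule T_add)
      then show ?thesis by simp
    qed
    then have "cls (\<lambda>m. rep (G m) b) = cls (\<lambda>m. rep (\<Delta> (sig 0 b) m))" by (rule cls_eqI)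
    then show ?thesis using gamma_sig0[OF G] carrier_cls[OF cb] by simp
  qed
  have "gamma t G = \<Delta>" by (rule End_unique[OF GE E eq])
  then show ?thesis using G by blast
qed

theorem main_flat:
  "(\<forall>G\<in>gr_D \<iota> t. gamma t G \<in> diff_ops (gr_ring t) (gr_scalar \<iota> t) (gr_t t))
    \<and> (inj_on (gamma t) (gr_D \<iota> t) \<longleftrightarrow>
         gamma t ` gr_D \<iota> t = diff_ops (gr_ring t) (gr_scalar \<iota> t) (gr_t t))"
proof (intro conjI ballI iffI)
  fix G assume "G \<in> gr_D \<iota> t" then show "gamma t G \<in> diff_ops R (gr_scalar \<iota> t) (gr_t t)" by (rule part_i)
next
  assume inj: "inj_on (gamma t) (gr_D \<iota> t)"
  show "gamma t ` gr_D \<iota> t = diff_ops R (gr_scalar \<iota> t) (gr_t t)"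
    using part_i surj_of_inj[OF inj] by blast
next
  assume "gamma t ` gr_D \<iota> t = diff_ops R (gr_scalar \<iota> t) (gr_t t)"
  then show "inj_on (gamma t) (gr_D \<iota> t)" by (rule inj_of_surj)
qed

end

theorem lemma9p2:
  fixes \<iota>A :: "'k::field \<Rightarrow> 'a::comm_ring_1" and \<iota> :: "'k \<Rightarrow> 'b::ring_1"
    and t :: 'b and n :: nat
  assumes "k_algebra_str \<iota>A"
    and "kn_algebra_str \<iota> t n"
    and "gr_iso_tensor \<iota>A \<iota> t n"
  shows "(\<forall>G\<in>gr_D \<iota> t. gamma t G \<in> diff_ops (gr_ring t) (gr_scalar \<iota> t) (gr_t t))
    \<and> (inj_on (gamma t) (gr_D \<iota> t) \<longleftrightarrow>
         gamma t ` gr_D \<iota> t = diff_ops (gr_ring t) (gr_scalar \<iota> t) (gr_t t))"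
proof -
  obtain \<psi> :: "(nat \<Rightarrow> 'b set) \<Rightarrow> nat \<Rightarrow> 'a" where
    \<psi>: "\<psi> \<in> ring_hom (gr_ring t) (tensor_kn n)" "bij_betw \<psi> (carrier (gr_ring t)) (carrier (tensor_kn n))"
      "\<psi> (gr_t t) = t_kn n"
    using assms(3) unfolding gr_iso_tensor_def by blast
  interpret Bflat \<iota> t n \<psi>
    by (unfold_locales) (use assms(2) \<psi> in auto)
  show ?thesis by (rule main_flat)
qed


end
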